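(* Let $q,r\ge0$, let $m\in\mathcal{M}$ be non-zero, and let $a,b\ge0$, $M\in\mathcal{M}$ be the unique triple with $$q+\frac r\lambda+\int\frac{m(du)}{\lambda+u}=\frac{1}{a\lambda+b+\int\frac{\lambda}{\lambda+u}M(du)},\qquad\lambda>0.$$ Define $$s_-=\sup\Big\{s<\inf\mathcal{S}(m):\ s\Big(q+\int\frac{m(du)}{u-s}\Big)<r\Big\},\qquad s_+=\inf\Big\{s>\sup\mathcal{S}(m):\ s\Big(q-\int\frac{m(du)}{s-u}\Big)>r\Big\}.$$ Then: (i) If $a=0=b$, then $\frac{r}{r+\overline m_0+q\inf\mathcal{S}(m)}\inf\mathcal{S}(m)\le s_-\le\inf\mathcal{S}(M)$ and $\sup\mathcal{S}(M)\le s_+$, where $s_+\le\sup\mathcal{S}(m)+(r+\overline m_0)q^{-1}$ if $q>0$ and $s_+=\infty$ if $q=0$. (ii) If $a>0$ and $b=0$, then $\frac{r}{r+\overline m_0}\inf\mathcal{S}(m)\le s_-\le\inf\mathcal{S}(M)\le\sup\mathcal{S}(M)\le\sup\mathcal{S}(m)$. (iii) If $a=0$ and $b>0$, then $\inf\mathcal{S}(m)\le\inf\mathcal{S}(M)\le\sup\mathcal{S}(M)\le s_+$, where $s_+\le\sup\mathcal{S}(m)+\overline m_0q^{-1}$ if $q>0$ and $s_+=\infty$ if $q=0$. (iv) If $a,b>0$, then $\mathcal{S}(M)\subset[\inf\mathcal{S}(m),\sup\mathcal{S}(m)]$.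
   Context: $\mathcal{M}$ is the set of measures $m$ on $(0,\infty)$ with $\int(1+u)^{-1}m(du)<\infty$; $\overline m_\alpha=\int u^\alpha m(du)$; $\mathcal{S}(m)$ denotes the support of $m$, with $\mathcal{S}(M)=\emptyset$ when $M\equiv0$. Convention $1/\infty=0$, $\inf\emptyset=\infty$. *)

theory Defs
  imports "HOL-Analysis.Analysis"
begin

text \<open>The class \<M>: measures on (0,\<infinity>), represented as Borel measures on the real
line that give no mass to (-\<infinity>,0], with \<integral>(1+u)^{-1} m(du) < \<infinity>.\<close>
definition Mclass :: "real measure set" where
  "Mclass = {m. sets m = sets borel \<and> emeasure m {..0} = 0 \<and>
                (\<integral>\<^sup>+ u. ennreal (1 / (1 + u)) \<partial>m) < \<infinity>}"

definition supp :: "real measure \<Rightarrow> real set" where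
  "supp m = {x. 0 < x \<and> (\<forall>e>0. 0 < emeasure m {x - e <..< x + e})}"

text \<open>inf and sup of the support, in the extended reals (inf of empty set = \<infinity>).\<close>
definition infS :: "real measure \<Rightarrow> ereal" where
  "infS m = Inf (ereal ` supp m)"

definition supS :: "real measure \<Rightarrow> ereal" where
  "supS m = Sup (ereal ` supp m)"

definition mbar0 :: "real measure \<Rightarrow> ereal" where
  "mbar0 m = enn2ereal (emeasure m (space m))"

definition s_minus :: "real \<Rightarrow> real \<Rightarrow> real measure \<Rightarrow> ereal" where
  "s_minus q r m = Sup (ereal ` {s. ereal s < infS m \<and>
        s * (q + (\<integral>u. 1 / (u - s) \<partial>m)) < r})"

definition s_plus :: "real \<Rightarrow> real \<Rightarrow> real measure \<Rightarrow> ereal" where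
  "s_plus q r m = Inf (ereal ` {s. supS m < ereal s \<and>
        s * (q - (\<integral>u. 1 / (s - u) \<partial>m)) > r})"

end

theory Submission
  imports Defs "HOL-Complex_Analysis.Complex_Analysis"
begin

lemma geo_aux: "(a::real) \<noteq> 0 \<Longrightarrow> complex_of_real (g / a^Suc i) * w^i = of_real (g/a) * (w / of_real a)^i"
  by (simp add: power_divide)

lemma exch_int:
  fixes \<mu> :: "real measure" and \<beta> \<gamma> :: "real \<Rightarrow> real" and x0 \<sigma> :: real
  assumes [measurable]: "\<beta> \<in> borel_measurable \<mu>" "\<gamma> \<in> borel_measurable \<mu>"
   and A\<beta>: "AE u in \<mu>. \<sigma> \<le> \<beta> u" and A\<gamma>: "AE u in \<mu>. 0 \<le> \<gamma> u"
   and pos: "0 < x0 + \<sigma>" and int: "integrable \<mu> (\<lambda>u. \<gamma> u / (x0 + \<beta> u))"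
  shows "integrable \<mu> (\<lambda>u. \<gamma> u / (x0 + \<beta> u)^Suc i)"
  proof (rule Bochner_Integration.integrable_bound)
    show "integrable \<mu> (\<lambda>u. (1/(x0+\<sigma>))^i * (\<gamma> u / (x0 + \<beta> u)))" by (intro integrable_mult_right int)
    show "(\<lambda>u. \<gamma> u / (x0 + \<beta> u)^Suc i) \<in> borel_measurable \<mu>" by measurable
    show "AE u in \<mu>. norm (\<gamma> u / (x0 + \<beta> u)^Suc i) \<le> norm ((1/(x0+\<sigma>))^i * (\<gamma> u / (x0 + \<beta> u)))"
      using A\<beta> A\<gamma>
    proof eventually_elim
      case (elim u)
      have a: "x0 + \<sigma> \<le> x0 + \<beta> u" using elim by simp
      have "(x0+\<sigma>)^i \<le> (x0 + \<beta> u)^i" using a pos by (intro power_mono) auto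
      then have "\<gamma> u / (x0 + \<beta> u)^Suc i \<le> (1/(x0+\<sigma>))^i * (\<gamma> u / (x0 + \<beta> u))"
      proof -
        assume h: "(x0+\<sigma>)^i \<le> (x0 + \<beta> u)^i"
        have "\<gamma> u / (x0 + \<beta> u)^Suc i = (\<gamma> u/(x0+\<beta> u)) / (x0+\<beta> u)^i" by simp
        also have "\<dots> \<le> (\<gamma> u/(x0+\<beta> u)) / (x0+\<sigma>)^i"
          using h elim pos a by (intro divide_left_mono) auto
        also have "\<dots> = (1/(x0+\<sigma>))^i * (\<gamma> u / (x0 + \<beta> u))" by (simp add: power_divide)
        finally show ?thesis .
      qed
      moreover have "0 \<le> \<gamma> u / (x0 + \<beta> u)^Suc i" using elim pos a by auto
      ultimately show ?case using elim pos a by auto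
    qed
  qed

lemma exch:
  fixes \<mu> :: "real measure" and \<beta> \<gamma> :: "real \<Rightarrow> real" and x0 \<sigma> :: real and z :: complex
  assumes [measurable]: "\<beta> \<in> borel_measurable \<mu>" "\<gamma> \<in> borel_measurable \<mu>"
   and A\<beta>: "AE u in \<mu>. \<sigma> \<le> \<beta> u" and A\<gamma>: "AE u in \<mu>. 0 \<le> \<gamma> u"
   and pos: "0 < x0 + \<sigma>" and int: "integrable \<mu> (\<lambda>u. \<gamma> u / (x0 + \<beta> u))"
   and z: "norm z < x0 + \<sigma>"
  shows "(\<lambda>n. of_real ((-1)^n * (\<integral>u. \<gamma> u / (x0 + \<beta> u)^(Suc n) \<partial>\<mu>)) * z^n) sums
            (\<integral>u. of_real (\<gamma> u) / (of_real (x0 + \<beta> u) + z) \<partial>\<mu>)"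
proof -
  define \<theta> where "\<theta> = norm z / (x0 + \<sigma>)"
  have th0: "0 \<le> \<theta>" and th1: "\<theta> < 1" using z pos by (auto simp: \<theta>_def)
  define f where "f i u = complex_of_real (\<gamma> u / (x0 + \<beta> u)^Suc i) * (-z)^i" for i u
  have intr: "integrable \<mu> (\<lambda>u. \<gamma> u / (x0 + \<beta> u)^Suc i)" for i
  proof (rule Bochner_Integration.integrable_bound)
    show "integrable \<mu> (\<lambda>u. (1/(x0+\<sigma>))^i * (\<gamma> u / (x0 + \<beta> u)))" by (intro integrable_mult_right int)
    show "(\<lambda>u. \<gamma> u / (x0 + \<beta> u)^Suc i) \<in> borel_measurable \<mu>" by measurable
    show "AE u in \<mu>. norm (\<gamma> u / (x0 + \<beta> u)^Suc i) \<le> norm ((1/(x0+\<sigma>))^i * (\<gamma> u / (x0 + \<beta> u)))"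
      using A\<beta> A\<gamma>
    proof eventually_elim
      case (elim u)
      have a: "x0 + \<sigma> \<le> x0 + \<beta> u" using elim by simp
      have "(x0+\<sigma>)^i \<le> (x0 + \<beta> u)^i" using a pos by (intro power_mono) auto
      then have "\<gamma> u / (x0 + \<beta> u)^Suc i \<le> (1/(x0+\<sigma>))^i * (\<gamma> u / (x0 + \<beta> u))"
      proof -
        assume h: "(x0+\<sigma>)^i \<le> (x0 + \<beta> u)^i"
        have "\<gamma> u / (x0 + \<beta> u)^Suc i = (\<gamma> u/(x0+\<beta> u)) / (x0+\<beta> u)^i" by simp
        also have "\<dots> \<le> (\<gamma> u/(x0+\<beta> u)) / (x0+\<sigma>)^i"
          using h elim pos a by (intro divide_left_mono) auto
        also have "\<dots> = (1/(x0+\<sigma>))^i * (\<gamma> u / (x0 + \<beta> u))" by (simp add: power_divide)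
        finally show ?thesis .
      qed
      moreover have "0 \<le> \<gamma> u / (x0 + \<beta> u)^Suc i" using elim pos a by auto
      ultimately show ?case using elim pos a by auto
    qed
  qed
  have e_bound: "(\<integral>u. \<gamma> u / (x0 + \<beta> u)^Suc i \<partial>\<mu>) * norm z ^ i \<le> \<theta>^i * (\<integral>u. \<gamma> u / (x0 + \<beta> u) \<partial>\<mu>)" for i
  proof -
    have "(\<integral>u. \<gamma> u / (x0 + \<beta> u)^Suc i \<partial>\<mu>) * norm z ^ i = (\<integral>u. \<gamma> u / (x0 + \<beta> u)^Suc i * norm z ^ i \<partial>\<mu>)"
      by (rule integral_mult_left_zero[symmetric])
    also have "\<dots> \<le> (\<integral>u. \<theta>^i * (\<gamma> u / (x0 + \<beta> u)) \<partial>\<mu>)"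
    proof (rule integral_mono_AE)
      show "integrable \<mu> (\<lambda>u. \<gamma> u / (x0 + \<beta> u)^Suc i * norm z ^ i)" by (intro integrable_mult_left intr)
      show "integrable \<mu> (\<lambda>u. \<theta>^i * (\<gamma> u / (x0 + \<beta> u)))" by (intro integrable_mult_right int)
      show "AE u in \<mu>. \<gamma> u / (x0 + \<beta> u)^Suc i * norm z ^ i \<le> \<theta>^i * (\<gamma> u / (x0 + \<beta> u))"
        using A\<beta> A\<gamma>
      proof eventually_elim
        case (elim u)
        have a: "x0 + \<sigma> \<le> x0 + \<beta> u" using elim by simp
        have "(norm z / (x0 + \<beta> u))^i \<le> \<theta>^i" unfolding \<theta>_def
          using a pos by (intro power_mono divide_left_mono) auto
        then have "\<gamma> u / (x0 + \<beta> u) * (norm z / (x0 + \<beta> u))^i \<le> \<gamma> u / (x0 + \<beta> u) * \<theta>^i"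
          using elim pos a by (intro mult_left_mono) auto
        then show ?case by (simp add: power_divide field_simps)
      qed
    qed
    also have "\<dots> = \<theta>^i * (\<integral>u. \<gamma> u / (x0 + \<beta> u) \<partial>\<mu>)" by (rule integral_mult_right_zero)
    finally show ?thesis .
  qed
  have fint: "integrable \<mu> (f i)" for i
    unfolding f_def using intr[of i] by (intro integrable_mult_left integrable_of_real) auto
  have fnorm: "(\<integral>u. norm (f i u) \<partial>\<mu>) = (\<integral>u. \<gamma> u / (x0 + \<beta> u)^Suc i \<partial>\<mu>) * norm z ^ i" for i
  proof -
    have "(\<integral>u. norm (f i u) \<partial>\<mu>) = (\<integral>u. \<gamma> u / (x0 + \<beta> u)^Suc i * norm z ^ i \<partial>\<mu>)"
    proof (rule integral_cong_AE)
      show "AE u in \<mu>. norm (f i u) = \<gamma> u / (x0 + \<beta> u)^Suc i * norm z ^ i"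
        using A\<beta> A\<gamma>
      proof eventually_elim
        case (elim u)
        have "0 \<le> \<gamma> u / (x0+\<beta> u)^Suc i" using elim pos by auto
        then show ?case by (simp only: f_def norm_mult norm_of_real norm_power norm_minus_cancel abs_of_nonneg)
      qed
    qed (use fint in \<open>auto intro: borel_measurable_integrable\<close>)
    then show ?thesis by (simp only: integral_mult_left_zero)
  qed
  have "(\<lambda>i. integral\<^sup>L \<mu> (f i)) sums (\<integral>u. (\<Sum>i. f i u) \<partial>\<mu>)"
  proof (rule sums_integral)
    show "integrable \<mu> (f i)" for i by (rule fint)
    show "AE u in \<mu>. summable (\<lambda>i. norm (f i u))"
      using A\<beta> A\<gamma>
    proof eventually_elim
      case (elim u)
      have a: "x0 + \<sigma> \<le> x0 + \<beta> u" using elim by simp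
      have "norm (f i u) = \<gamma> u / (x0 + \<beta> u) * (norm z / (x0 + \<beta> u))^i" for i
      proof -
        have "0 \<le> \<gamma> u / (x0+\<beta> u)^Suc i" using elim pos by auto
        then have "norm (f i u) = \<gamma> u / (x0 + \<beta> u)^Suc i * norm z ^ i"
          by (simp only: f_def norm_mult norm_of_real norm_power norm_minus_cancel abs_of_nonneg)
        then show ?thesis by (simp add: power_divide)
      qed
      moreover have "summable (\<lambda>i. \<gamma> u / (x0 + \<beta> u) * (norm z / (x0 + \<beta> u))^i)"
        using z a pos by (intro summable_mult summable_geometric) auto
      ultimately show ?case by simp
    qed
    show "summable (\<lambda>i. \<integral>u. norm (f i u) \<partial>\<mu>)"
    proof (rule summable_comparison_test)
      show "\<exists>N. \<forall>n\<ge>N. norm (\<integral>u. norm (f n u) \<partial>\<mu>) \<le> \<theta>^n * (\<integral>u. \<gamma> u / (x0 + \<beta> u) \<partial>\<mu>)"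
      proof (intro exI allI impI)
        fix n :: nat
        have "0 \<le> (\<integral>u. \<gamma> u / (x0 + \<beta> u)^Suc n \<partial>\<mu>)"
        proof (rule integral_nonneg_AE)
          show "AE u in \<mu>. 0 \<le> \<gamma> u / (x0+\<beta> u)^Suc n" using A\<beta> A\<gamma>
            by eventually_elim (use pos in auto)
        qed
        then show "norm (\<integral>u. norm (f n u) \<partial>\<mu>) \<le> \<theta>^n * (\<integral>u. \<gamma> u / (x0 + \<beta> u) \<partial>\<mu>)"
          using e_bound[of n] unfolding fnorm real_norm_def by (subst abs_of_nonneg) auto
      qed
      show "summable (\<lambda>n. \<theta>^n * (\<integral>u. \<gamma> u / (x0 + \<beta> u) \<partial>\<mu>))"
        using th0 th1 by (intro summable_mult2 summable_geometric) auto
    qed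
  qed
  moreover have "integral\<^sup>L \<mu> (f i) = of_real ((-1)^i * (\<integral>u. \<gamma> u / (x0 + \<beta> u)^(Suc i) \<partial>\<mu>)) * z^i" for i
  proof -
    have "integral\<^sup>L \<mu> (f i) = of_real (\<integral>u. \<gamma> u / (x0 + \<beta> u)^(Suc i) \<partial>\<mu>) * (-z)^i"
      unfolding f_def by (simp only: integral_mult_left_zero integral_complex_of_real)
    also have "\<dots> = of_real ((-1)^i * (\<integral>u. \<gamma> u / (x0 + \<beta> u)^(Suc i) \<partial>\<mu>)) * z^i"
      by (subst power_minus) (simp only: of_real_mult of_real_power of_real_minus of_real_1 mult_ac)
    finally show ?thesis .
  qed
  moreover have "(\<integral>u. (\<Sum>i. f i u) \<partial>\<mu>) = (\<integral>u. of_real (\<gamma> u) / (of_real (x0 + \<beta> u) + z) \<partial>\<mu>)"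
  proof (rule integral_cong_AE)
    show "AE u in \<mu>. (\<Sum>i. f i u) = of_real (\<gamma> u) / (of_real (x0 + \<beta> u) + z)"
      using A\<beta>
    proof eventually_elim
      case (elim u)
      define a where "a = x0 + \<beta> u"
      have a: "x0 + \<sigma> \<le> a" "a > 0" using elim pos by (auto simp: a_def)
      have w: "norm (-z / of_real a) < 1" using z a by (simp add: norm_divide)
      have "(\<lambda>i. of_real (\<gamma> u / a) * (-z / of_real a)^i) sums (of_real (\<gamma> u / a) * (1 / (1 - (-z / of_real a))))"
        using w by (intro sums_mult geometric_sums)
      moreover have "f i u = of_real (\<gamma> u / a) * (-z / of_real a)^i" for i
        using a unfolding f_def a_def[symmetric] by (intro geo_aux) auto
      moreover have "of_real (\<gamma> u / a) * (1 / (1 - (-z / of_real a))) = of_real (\<gamma> u) / (of_real a + z)"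
      proof -
        have az: "of_real a + z \<noteq> 0"
        proof
          assume "of_real a + z = 0"
          then have "z = - of_real a" by (simp add: eq_neg_iff_add_eq_0 add.commute)
          then show False using z a by simp
        qed
        have an: "(of_real a :: complex) \<noteq> 0" using a by simp
        have "1 - (-z / of_real a) = (of_real a + z)/of_real a" using an by (simp add: field_simps)
        then show ?thesis using an az by (simp add: divide_simps)
      qed
      ultimately show ?case by (simp add: sums_iff a_def)
    qed
  qed (measurable; auto simp: f_def)+
  ultimately show ?thesis by simp
qed

lemma limpt_real_seg:
  assumes "0 < d"
  shows "(0::complex) islimpt (complex_of_real ` ({-d<..<d} - {0}))"
proof (rule islimpt_approachable[THEN iffD2], intro allI impI)
  fix e :: real assume e: "0 < e"
  define t where "t = min d e / 2"
  have t: "0 < t" "t < d" "t < e" using e assms by (auto simp: t_def)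
  show "\<exists>x'\<in>complex_of_real ` ({- d<..<d} - {0}). x' \<noteq> 0 \<and> dist x' 0 < e"
    using t by (intro bexI[of _ "of_real t"]) (auto simp: dist_norm)
qed

lemma core:
  fixes \<mu> :: "real measure" and \<beta> \<gamma> :: "real \<Rightarrow> real" and x0 R \<rho> :: real
    and P :: "complex \<Rightarrow> complex"
  assumes [measurable]: "\<beta> \<in> borel_measurable \<mu>" "\<gamma> \<in> borel_measurable \<mu>"
   and A\<beta>: "AE u in \<mu>. 0 \<le> \<beta> u" and A\<gamma>: "AE u in \<mu>. 0 \<le> \<gamma> u"
   and x0: "0 < x0" and int: "integrable \<mu> (\<lambda>u. \<gamma> u / (x0 + \<beta> u))"
   and hol: "P holomorphic_on ball (of_real x0) R"
   and eq: "\<And>x. 0 < x \<Longrightarrow> x < 2*x0 \<Longrightarrow> x \<noteq> x0 \<Longrightarrow>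
              P (of_real x) = of_real (\<integral>u. \<gamma> u / (x + \<beta> u) \<partial>\<mu>)"
   and \<rho>: "0 < \<rho>" "\<rho> < R" and xR: "x0 < R"
  shows "AE u in \<mu>. x0 + \<beta> u \<le> \<rho> \<longrightarrow> \<gamma> u = 0"
proof -
  define e where "e n = (\<integral>u. \<gamma> u / (x0 + \<beta> u)^Suc n \<partial>\<mu>)" for n
  define F where "F = Abs_fps (\<lambda>n. complex_of_real ((-1)^n * e n))"
  have sm: "(\<lambda>n. fps_nth F n * z^n) sums (\<integral>u. of_real (\<gamma> u) / (of_real (x0 + \<beta> u) + z) \<partial>\<mu>)"
    if "norm z < x0" for z
    unfolding F_def e_def fps_nth_Abs_fps
    by (rule exch[where \<sigma>=0]) (use that x0 A\<beta> A\<gamma> int in auto)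
  have rad: "ereal x0 \<le> fps_conv_radius F"
    unfolding fps_conv_radius_def
  proof (rule conv_radius_geI_ex')
    fix r :: real assume "0 < r" "ereal r < ereal x0"
    then show "summable (\<lambda>n. fps_nth F n * of_real r ^ n)"
      using sm[of "of_real r"] by (auto simp: sums_iff)
  qed
  have ev: "eval_fps F z = (\<integral>u. of_real (\<gamma> u) / (of_real (x0 + \<beta> u) + z) \<partial>\<mu>)"
    if "norm z < x0" for z
    unfolding eval_fps_def using sm[OF that] by (simp add: sums_iff)
  define Pc where "Pc z = P (of_real x0 + z)" for z
  have holc: "Pc holomorphic_on ball 0 R"
  proof -
    have "(P \<circ> (\<lambda>z. of_real x0 + z)) holomorphic_on ball 0 R"
      by (rule holomorphic_on_compose_gen[OF _ hol]) (auto intro!: holomorphic_intros simp: dist_norm)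
    then show ?thesis by (simp add: Pc_def[abs_def] o_def)
  qed
  have agree: "Pc z = eval_fps F z" if z: "z \<in> ball 0 x0" for z
  proof -
    have "Pc z - eval_fps F z = 0"
    proof (rule analytic_continuation[where f="\<lambda>z. Pc z - eval_fps F z" and w=z and S="ball 0 x0" and U="complex_of_real ` ({-x0<..<x0} - {0})" and \<xi>=0])
      show "(\<lambda>z. Pc z - eval_fps F z) holomorphic_on ball 0 x0"
      proof (rule holomorphic_on_diff)
        show "Pc holomorphic_on ball 0 x0" by (rule holomorphic_on_subset[OF holc]) (use xR in auto)
        show "eval_fps F holomorphic_on ball 0 x0"
        proof (rule holomorphic_on_eval_fps)
          show "ball 0 x0 \<subseteq> eball 0 (fps_conv_radius F)"
            using rad by (auto simp: eball_def intro: less_le_trans[of _ "ereal x0"])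
        qed
      qed
      show "complex_of_real ` ({- x0<..<x0} - {0}) \<subseteq> ball 0 x0" by auto
      show "0 islimpt complex_of_real ` ({- x0<..<x0} - {0})" by (rule limpt_real_seg[OF x0])
      show "z \<in> ball 0 x0" by (rule z)
      fix w assume "w \<in> complex_of_real ` ({- x0<..<x0} - {0})"
      then obtain y where y0: "y \<in> {-x0<..<x0} - {0}" and w: "w = of_real y" by (rule imageE)
      from y0 have y: "-x0 < y" "y < x0" "y \<noteq> 0" by auto
      have "eval_fps F w = (\<integral>u. of_real (\<gamma> u) / (of_real (x0 + \<beta> u) + of_real y) \<partial>\<mu>)"
        using ev[of w] y w by auto
      also have "\<dots> = (\<integral>u. complex_of_real (\<gamma> u / ((x0 + y) + \<beta> u)) \<partial>\<mu>)"
        by (rule Bochner_Integration.integral_cong) (auto simp: add_ac)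
      also have "\<dots> = of_real (\<integral>u. \<gamma> u / ((x0 + y) + \<beta> u) \<partial>\<mu>)"
        by (rule integral_complex_of_real)
      also have "\<dots> = P (of_real (x0 + y))"
        using y x0 by (intro eq[symmetric]) auto
      finally show "Pc w - eval_fps F w = 0" by (simp add: Pc_def w)
    qed (auto simp: x0)
    then show ?thesis by simp
  qed
  have exp: "Pc has_fps_expansion F"
    unfolding has_fps_expansion_def
  proof
    show "0 < fps_conv_radius F" using rad x0 by (meson ereal_less(2) less_le_trans)
    show "\<forall>\<^sub>F z in nhds 0. eval_fps F z = Pc z"
      using agree eventually_nhds_in_open[of "ball 0 x0" 0] x0 by (auto elim!: eventually_mono)
  qed
  have coef: "fps_nth F n = (deriv ^^ n) Pc 0 / fact n" for n
    by (rule fps_nth_fps_expansion[OF exp])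
  have "(\<lambda>n. (deriv ^^ n) Pc 0 / fact n * (- of_real \<rho> - 0)^n) sums Pc (- of_real \<rho>)"
    by (rule holomorphic_power_series[OF holc]) (use \<rho> in auto)
  then have "summable (\<lambda>n. fps_nth F n * (- of_real \<rho>)^n)"
    by (simp add: coef sums_iff)
  then have "(\<lambda>n. fps_nth F n * (- of_real \<rho>)^n) \<longlonglongrightarrow> 0"
    by (rule summable_LIMSEQ_zero)
  then have "(\<lambda>n. norm (fps_nth F n * (- of_real \<rho>)^n)) \<longlonglongrightarrow> 0"
    by (rule tendsto_norm_zero)
  moreover have enn: "0 \<le> e n" for n
    unfolding e_def
  proof (rule integral_nonneg_AE)
    show "AE u in \<mu>. 0 \<le> \<gamma> u / (x0+\<beta> u)^Suc n" using A\<beta> A\<gamma>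
      by eventually_elim (use x0 in auto)
  qed
  moreover have "norm (fps_nth F n * (- of_real \<rho>)^n) = e n * \<rho>^n" for n
    using enn[of n] \<rho> by (simp add: F_def norm_mult norm_power)
  ultimately have lim: "(\<lambda>n. e n * \<rho>^n) \<longlonglongrightarrow> 0" by simp
  define g where "g u = (if x0 + \<beta> u \<le> \<rho> then \<gamma> u / \<rho> else 0)" for u
  have gint: "integrable \<mu> g"
  proof (rule Bochner_Integration.integrable_bound[OF int])
    show "g \<in> borel_measurable \<mu>" unfolding g_def by measurable
    show "AE u in \<mu>. norm (g u) \<le> norm (\<gamma> u / (x0 + \<beta> u))" using A\<beta> A\<gamma>
    proof eventually_elim
      case (elim u)
      show ?case
      proof (cases "x0 + \<beta> u \<le> \<rho>")
        case True
        have "\<gamma> u / \<rho> \<le> \<gamma> u / (x0 + \<beta> u)" using True elim x0 by (intro divide_left_mono) auto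
        then show ?thesis using True elim x0 \<rho> by (simp add: g_def)
      qed (simp add: g_def)
    qed
  qed
  have gnn: "AE u in \<mu>. 0 \<le> g u" using A\<gamma> by eventually_elim (use \<rho> in \<open>auto simp: g_def\<close>)
  have gle: "(\<integral>u. g u \<partial>\<mu>) \<le> e n * \<rho>^n" for n
  proof -
    have "(\<integral>u. g u \<partial>\<mu>) \<le> (\<integral>u. \<gamma> u / (x0 + \<beta> u)^Suc n * \<rho>^n \<partial>\<mu>)"
    proof (rule integral_mono_AE[OF gint])
      show "integrable \<mu> (\<lambda>u. \<gamma> u / (x0 + \<beta> u)^Suc n * \<rho>^n)"
        using exch_int[OF _ _ A\<beta> A\<gamma> _ int, of n] x0 by (intro integrable_mult_left) auto
      show "AE u in \<mu>. g u \<le> \<gamma> u / (x0 + \<beta> u)^Suc n * \<rho>^n" using A\<beta> A\<gamma>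
      proof eventually_elim
        case (elim u)
        show ?case
        proof (cases "x0 + \<beta> u \<le> \<rho>")
          case True
          define a where "a = x0 + \<beta> u"
          have a: "0 < a" "a \<le> \<rho>" using True elim x0 by (auto simp: a_def)
          have "a^n \<le> \<rho>^n" using a by (intro power_mono) auto
          then have "1 \<le> \<rho>^n / a^n" using a by simp
          have "\<gamma> u / \<rho> \<le> \<gamma> u / a" using a elim by (intro divide_left_mono) auto
          also have "\<dots> \<le> \<gamma> u / a * (\<rho>^n / a^n)"
            using mult_left_mono[OF \<open>1 \<le> \<rho>^n / a^n\<close>, of "\<gamma> u / a"] elim a by simp
          also have "\<dots> = \<gamma> u / a^Suc n * \<rho>^n" by (simp add: field_simps)
          finally show ?thesis using True by (simp add: g_def a_def)
        next
          case False
          then show ?thesis using elim x0 \<rho> by (simp add: g_def)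
        qed
      qed
    qed
    also have "\<dots> = e n * \<rho>^n" unfolding e_def by (rule integral_mult_left_zero)
    finally show ?thesis .
  qed
  have "(\<integral>u. g u \<partial>\<mu>) \<le> 0"
    by (rule LIMSEQ_le_const[OF lim]) (use gle in auto)
  moreover have "0 \<le> (\<integral>u. g u \<partial>\<mu>)" by (rule integral_nonneg_AE[OF gnn])
  ultimately have "(\<integral>u. g u \<partial>\<mu>) = 0" by simp
  then have "AE u in \<mu>. g u = 0" using integral_nonneg_eq_0_iff_AE[OF gint gnn] by simp
  then show ?thesis
    by eventually_elim (use \<rho> in \<open>auto simp: g_def split: if_splits\<close>)
qed


lemma Mclass_sets: "m \<in> Mclass \<Longrightarrow> sets m = sets borel" by (simp add: Mclass_def)

lemma Mclass_AE_pos: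
  assumes "m \<in> Mclass" shows "AE u in m. 0 < u"
proof (rule AE_I')
  have s: "sets m = sets borel" using assms by (simp add: Mclass_def)
  show "{..0::real} \<in> null_sets m" using assms s by (auto simp: Mclass_def null_sets_def)
  show "{x \<in> space m. \<not> 0 < x} \<subseteq> {..0}" by auto
qed

lemma Mclass_int:
  assumes "m \<in> Mclass" shows "integrable m (\<lambda>u. 1 / (1 + u))"
proof -
  have s[measurable_cong]: "sets m = sets borel" using assms by (simp add: Mclass_def)
  have "(\<integral>\<^sup>+ u. ennreal (norm (1 / (1 + u))) \<partial>m) = (\<integral>\<^sup>+ u. ennreal (1 / (1 + u)) \<partial>m)"
    using Mclass_AE_pos[OF assms] by (intro nn_integral_cong_AE) (auto elim!: eventually_mono)
  also have "\<dots> < \<infinity>" using assms by (simp add: Mclass_def)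
  finally show ?thesis by (intro integrableI_bounded) auto
qed

lemma null_of_nosupp:
  fixes \<mu> :: "real measure"
  assumes s: "sets \<mu> = sets borel" and A: "A \<in> sets borel" "A \<subseteq> {0<..}" "A \<inter> supp \<mu> = {}"
  shows "A \<in> null_sets \<mu>"
proof -
  define F where "F = {I. \<exists>x e. I = {x - e <..< x + e} \<and> emeasure \<mu> I = 0}"
  have Fo: "\<And>S. S \<in> F \<Longrightarrow> open S" by (auto simp: F_def)
  obtain F' where F': "F' \<subseteq> F" "countable F'" "\<Union>F' = \<Union>F" using Lindelof[OF Fo] by blast
  have "A \<subseteq> \<Union>F"
  proof
    fix x assume x: "x \<in> A"
    then have "x > 0" "x \<notin> supp \<mu>" using A by auto
    then obtain e where "e > 0" "\<not> 0 < emeasure \<mu> {x - e <..< x + e}" by (auto simp: supp_def)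
    then have "{x - e <..< x + e} \<in> F" "x \<in> {x - e <..< x + e}" by (auto simp: F_def)
    then show "x \<in> \<Union>F" by blast
  qed
  moreover have "(\<Union>I\<in>F'. I) \<in> null_sets \<mu>"
  proof (rule null_sets_UN')
    show "countable F'" by fact
    fix I assume "I \<in> F'"
    then obtain x e where "I = {x - e <..< x + e}" "emeasure \<mu> I = 0" using F' by (auto simp: F_def)
    then show "I \<in> null_sets \<mu>" using s by (auto simp: null_sets_def)
  qed
  ultimately show ?thesis using F' A s by (auto intro: null_sets_subset)
qed

lemma AE_ge_infS:
  assumes "m \<in> Mclass" shows "AE u in m. infS m \<le> ereal u"
proof -
  have s: "sets m = sets borel" using assms by (simp add: Mclass_def)
  have "{u. 0 < u \<and> ereal u < infS m} \<in> null_sets m"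
  proof (rule null_of_nosupp[OF s])
    show "{u. 0 < u \<and> ereal u < infS m} \<in> sets borel" by measurable
    show "{u. 0 < u \<and> ereal u < infS m} \<inter> supp m = {}"
      by (auto simp: infS_def) (meson Inf_lower imageI leD)
  qed auto
  then have "AE u in m. \<not> (0 < u \<and> ereal u < infS m)"
    by (rule AE_I') auto
  then show ?thesis using Mclass_AE_pos[OF assms] by eventually_elim auto
qed

lemma AE_le_supS:
  assumes "m \<in> Mclass" shows "AE u in m. ereal u \<le> supS m"
proof -
  have s: "sets m = sets borel" using assms by (simp add: Mclass_def)
  have "{u. 0 < u \<and> supS m < ereal u} \<in> null_sets m"
  proof (rule null_of_nosupp[OF s])
    show "{u. 0 < u \<and> supS m < ereal u} \<in> sets borel" by measurable
    show "{u. 0 < u \<and> supS m < ereal u} \<inter> supp m = {}"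
      by (auto simp: supS_def) (meson Sup_upper imageI leD)
  qed auto
  then have "AE u in m. \<not> (0 < u \<and> supS m < ereal u)"
    by (rule AE_I') auto
  then show ?thesis using Mclass_AE_pos[OF assms] by eventually_elim auto
qed

lemma supp_ge:
  fixes \<mu> :: "real measure"
  assumes s: "sets \<mu> = sets borel" and ae: "AE u in \<mu>. c < u" and x: "x \<in> supp \<mu>"
  shows "c \<le> x"
proof (rule ccontr)
  assume "\<not> c \<le> x"
  then have "x < c" by simp
  obtain N where N: "N \<in> null_sets \<mu>" "{u \<in> space \<mu>. \<not> c < u} \<subseteq> N"
    using ae unfolding eventually_ae_filter by blast
  have "{x - (c - x) <..< x + (c - x)} \<subseteq> N" using N s \<open>x < c\<close> by (auto simp: sets_eq_imp_space_eq)
  then have "emeasure \<mu> {x - (c - x) <..< x + (c - x)} = 0"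
    by (rule emeasure_eq_0[OF null_setsD2[OF N(1)] null_setsD1[OF N(1)]])
  moreover have "0 < emeasure \<mu> {x - (c - x) <..< x + (c - x)}"
  proof -
    have "\<forall>e>0. 0 < emeasure \<mu> {x - e <..< x + e}" using x by (simp add: supp_def)
    then show ?thesis using \<open>x < c\<close> by (simp only: diff_gt_0_iff_gt)
  qed
  ultimately show False by simp
qed

lemma supp_le:
  fixes \<mu> :: "real measure"
  assumes s: "sets \<mu> = sets borel" and ae: "AE u in \<mu>. u < c" and x: "x \<in> supp \<mu>"
  shows "x \<le> c"
proof (rule ccontr)
  assume "\<not> x \<le> c"
  then have "c < x" by simp
  obtain N where N: "N \<in> null_sets \<mu>" "{u \<in> space \<mu>. \<not> u < c} \<subseteq> N"
    using ae unfolding eventually_ae_filter by blast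
  have "{x - (x - c) <..< x + (x - c)} \<subseteq> N" using N s \<open>c < x\<close> by (auto simp: sets_eq_imp_space_eq)
  then have "emeasure \<mu> {x - (x - c) <..< x + (x - c)} = 0"
    by (rule emeasure_eq_0[OF null_setsD2[OF N(1)] null_setsD1[OF N(1)]])
  moreover have "0 < emeasure \<mu> {x - (x - c) <..< x + (x - c)}"
  proof -
    have "\<forall>e>0. 0 < emeasure \<mu> {x - e <..< x + e}" using x by (simp add: supp_def)
    then show ?thesis using \<open>c < x\<close> by (simp only: diff_gt_0_iff_gt)
  qed
  ultimately show False by simp
qed

lemma supp_nonempty:
  assumes m: "m \<in> Mclass" and nz: "emeasure m (space m) \<noteq> 0"
  shows "supp m \<noteq> {}"
proof
  assume e: "supp m = {}"
  have s: "sets m = sets borel" using m by (simp add: Mclass_def)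
  have "{0::real<..} \<in> null_sets m" by (rule null_of_nosupp[OF s]) (use e in auto)
  moreover have "{..0::real} \<in> null_sets m" using m s by (auto simp: Mclass_def null_sets_def)
  ultimately have "{..0::real} \<union> {0<..} \<in> null_sets m" by auto
  moreover have "{..0::real} \<union> {0<..} = space m" using s by (auto simp: sets_eq_imp_space_eq)
  ultimately show False using nz by auto
qed

lemma infS_ge0: "0 \<le> infS m"
  by (auto simp: infS_def supp_def intro!: Inf_greatest)

lemma supS_pos: "supp m \<noteq> {} \<Longrightarrow> 0 < supS m"
proof -
  assume "supp m \<noteq> {}"
  then obtain x where x: "x \<in> supp m" by auto
  then have "ereal x \<le> supS m" by (auto simp: supS_def intro: Sup_upper)
  moreover have "0 < x" using x by (auto simp: supp_def)
  ultimately show ?thesis by (meson ereal_less(2) less_le_trans)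
qed

lemma infS_fin: assumes "supp m \<noteq> {}" obtains \<sigma> where "infS m = ereal \<sigma>" "0 \<le> \<sigma>"
proof -
  obtain x where x: "x \<in> supp m" using assms by auto
  then have "infS m \<le> ereal x" by (auto simp: infS_def intro: Inf_lower)
  then have "infS m \<noteq> \<infinity>" by auto
  moreover have "infS m \<noteq> -\<infinity>" using infS_ge0[of m] by auto
  ultimately obtain \<sigma> where "infS m = ereal \<sigma>" by (cases "infS m") auto
  then show ?thesis using that infS_ge0[of m] by auto
qed


lemma int_bound_M:
  fixes M :: "real measure"
  assumes M: "M \<in> Mclass" and [measurable]: "f \<in> borel_measurable borel"
    and b: "\<And>u. 0 < u \<Longrightarrow> \<bar>f u\<bar> \<le> C * (1 / (1 + u))"
  shows "integrable M f"
proof -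
  have s[measurable_cong]: "sets M = sets borel" using M by (simp add: Mclass_def)
  show ?thesis
  proof (rule Bochner_Integration.integrable_bound)
    show "integrable M (\<lambda>u. C * (1 / (1 + u)))" using Mclass_int[OF M] by (intro integrable_mult_right)
    show "f \<in> borel_measurable M" by measurable
    show "AE u in M. norm (f u) \<le> norm (C * (1 / (1 + u)))"
      using Mclass_AE_pos[OF M]
    proof eventually_elim
      case (elim u)
      have "\<bar>f u\<bar> \<le> C * (1 / (1 + u))" using b elim by blast
      also have "\<dots> \<le> \<bar>C * (1 / (1 + u))\<bar>" by (rule abs_ge_self)
      finally show ?case by (simp only: real_norm_def)
    qed
  qed
qed

lemma lowerM:
  fixes M :: "real measure" and G :: "complex \<Rightarrow> complex" and a b t :: real
  assumes M: "M \<in> Mclass" and t: "0 < t" and hol: "G holomorphic_on ball 1 (1+t)"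
   and eqG: "\<And>x. 0 < x \<Longrightarrow> x < 2 \<Longrightarrow> G (of_real x) = of_real (a*x + b + (\<integral>u. x/(x+u) \<partial>M))"
  shows "ereal t \<le> infS M"
proof -
  have s[measurable_cong]: "sets M = sets borel" using M by (simp add: Mclass_def)
  have pos: "AE u in M. 0 < u" by (rule Mclass_AE_pos[OF M])
  have intx: "integrable M (\<lambda>u. x/(x+u))" if x: "0 < x" for x
  proof (rule int_bound_M[OF M, where C="max 1 x"])
    fix u :: real assume u: "0 < u"
    have "x * (1 + u) \<le> max 1 x * (x + u)"
    proof (cases "x \<le> 1")
      case True then show ?thesis using u x by (simp add: max_def algebra_simps mult_left_le_one_le)
    next
      case False then show ?thesis using u x by (simp add: max_def algebra_simps)
    qed
    then show "\<bar>x / (x + u)\<bar> \<le> max 1 x * (1 / (1 + u))" using u x by (simp add: field_simps)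
  qed measurable
  define P where "P z = (if z = 1 then deriv G 1 else (G z - G 1)/(z - 1)) - of_real a" for z
  have holP: "P holomorphic_on ball 1 (1+t)"
    unfolding P_def by (intro holomorphic_on_diff holomorphic_on_const pole_lemma_open hol) auto
  have eqP: "P (of_real x) = of_real (\<integral>u. (u/(1+u)) / (x + u) \<partial>M)"
    if x: "0 < x" "x < 2" "x \<noteq> 1" for x
  proof -
    have G1: "G 1 = of_real (a + b + (\<integral>u. 1/(1+u) \<partial>M))" using eqG[of 1] by simp
    have "(\<integral>u. x/(x+u) \<partial>M) - (\<integral>u. 1/(1+u) \<partial>M) = (\<integral>u. x/(x+u) - 1/(1+u) \<partial>M)"
      using intx[of x] intx[of 1] x by (intro Bochner_Integration.integral_diff[symmetric]) auto
    also have "\<dots> = (\<integral>u. (x - 1) * ((u/(1+u)) / (x + u)) \<partial>M)"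
    proof (rule integral_cong_AE)
      show "AE u in M. x/(x+u) - 1/(1+u) = (x - 1) * ((u/(1+u)) / (x + u))"
        using pos by eventually_elim (use x in \<open>auto simp: field_simps\<close>)
    qed measurable
    also have "\<dots> = (x - 1) * (\<integral>u. (u/(1+u)) / (x + u) \<partial>M)" by (rule integral_mult_right_zero)
    finally have I: "(\<integral>u. x/(x+u) \<partial>M) - (\<integral>u. 1/(1+u) \<partial>M) = (x - 1) * (\<integral>u. (u/(1+u)) / (x + u) \<partial>M)" .
    have "x \<noteq> 1" using x by simp
    then have ne: "complex_of_real x \<noteq> 1" by (metis of_real_1 of_real_eq_iff)
    have "P (of_real x) = (G (of_real x) - G 1) / (of_real x - 1) - of_real a"
      using ne by (simp add: P_def)
    also have "\<dots> = of_real (((a*x + b + (\<integral>u. x/(x+u) \<partial>M)) - (a + b + (\<integral>u. 1/(1+u) \<partial>M))) / (x - 1) - a)"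
      using eqG[OF x(1,2)] G1 by simp
    also have "((a*x + b + (\<integral>u. x/(x+u) \<partial>M)) - (a + b + (\<integral>u. 1/(1+u) \<partial>M))) / (x - 1) - a
        = (\<integral>u. (u/(1+u)) / (x + u) \<partial>M)"
    proof -
      have "(a*x + b + (\<integral>u. x/(x+u) \<partial>M)) - (a + b + (\<integral>u. 1/(1+u) \<partial>M))
           = a * (x - 1) + (x - 1) * (\<integral>u. (u/(1+u)) / (x + u) \<partial>M)"
        using I by (simp add: algebra_simps)
      then show ?thesis using x by (simp add: field_simps)
    qed
    finally show ?thesis .
  qed
  have main: "AE u in M. 1 + u \<le> \<rho> \<longrightarrow> u/(1+u) = 0" if "0 < \<rho>" "\<rho> < 1 + t" for \<rho>
  proof (rule core[of "\<lambda>u. u" M "\<lambda>u. u/(1+u)" 1 P "1+t" \<rho>])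
    show "AE u in M. 0 \<le> u" using pos by eventually_elim auto
    show "AE u in M. 0 \<le> u/(1+u)" using pos by eventually_elim auto
    show "integrable M (\<lambda>u. u / (1 + u) / (1 + u))"
    proof (rule int_bound_M[OF M, where C=1])
      fix u :: real assume u: "0 < u"
      have h: "u / (1+u) / (1+u) \<le> 1/(1+u)" using u by (intro divide_right_mono) auto
      have "0 \<le> u/(1+u)/(1+u)" using u by auto
      then show "\<bar>u / (1 + u) / (1 + u)\<bar> \<le> 1 * (1 / (1 + u))"
        using h by (simp only: abs_of_nonneg mult_1)
    qed measurable
    show "P holomorphic_on ball (complex_of_real 1) (1 + t)" using holP by simp
    fix x :: real assume "0 < x" "x < 2 * 1" "x \<noteq> 1"
    then show "P (complex_of_real x) = complex_of_real (\<integral>u. u / (1 + u) / (x + u) \<partial>M)"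
      using eqP by auto
  qed (use that t in auto)
  show ?thesis unfolding infS_def
  proof (rule Inf_greatest, clarify)
    fix x assume x: "x \<in> supp M"
    show "ereal t \<le> ereal x"
    proof (rule ccontr)
      assume "\<not> ereal t \<le> ereal x"
      then have xt: "x < t" by simp
      have x0: "0 < x" using x by (simp add: supp_def)
      have mm: "AE u in M. 1 + u \<le> 1 + (x+t)/2 \<longrightarrow> u/(1+u) = 0"
        by (rule main) (insert xt x0 t, simp_all add: field_simps)
      have "AE u in M. (x+t)/2 < u"
        using mm pos by eventually_elim (auto simp: field_simps)
      then have "(x+t)/2 \<le> x" by (rule supp_ge[OF s _ x])
      then show False using xt by simp
    qed
  qed
qed

lemma alg_A1: "0 < (u::real) \<Longrightarrow> 0 < 1 + x*u \<Longrightarrow> (1/(u*(1+u))) / (x + 1/u) = 1/((1+u)*(1+x*u))"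
proof -
  assume u: "0 < u" and p: "0 < 1 + x*u"
  have e: "x + 1/u = (1+x*u)/u" using u by (simp add: field_simps)
  show ?thesis unfolding e using u p by (simp add: divide_simps)
qed

lemma upperM:
  fixes M :: "real measure" and \<Phi> :: "complex \<Rightarrow> complex" and a b \<tau> :: real
  assumes M: "M \<in> Mclass" and \<tau>: "0 < \<tau>" and hol: "\<Phi> holomorphic_on ball 1 (1+\<tau>)"
   and eq\<Phi>: "\<And>w. 0 < w \<Longrightarrow> w < 2 \<Longrightarrow> \<Phi> (of_real w) = of_real (a + b*w + (\<integral>u. w/(1+w*u) \<partial>M))"
  shows "supS M \<le> ereal (1/\<tau>)"
proof -
  have s[measurable_cong]: "sets M = sets borel" using M by (simp add: Mclass_def)
  have pos: "AE u in M. 0 < u" by (rule Mclass_AE_pos[OF M])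
  have intw: "integrable M (\<lambda>u. w/(1+w*u))" if x: "0 < w" for w
  proof (rule int_bound_M[OF M, where C="max 1 w"])
    fix u :: real assume u: "0 < u"
    have "w * (1 + u) \<le> max 1 w * (1 + w * u)"
    proof (cases "w \<le> 1")
      case True then show ?thesis using u x by (simp add: max_def algebra_simps)
    next
      case False then show ?thesis using u x by (simp add: max_def algebra_simps)
    qed
    moreover have "0 < 1 + w * u" using u x by (simp add: add_pos_pos)
    ultimately show "\<bar>w / (1 + w * u)\<bar> \<le> max 1 w * (1 / (1 + u))" using u x by (simp add: field_simps)
  qed measurable
  define P where "P z = (if z = 1 then deriv \<Phi> 1 else (\<Phi> z - \<Phi> 1)/(z - 1)) - of_real b" for z
  have holP: "P holomorphic_on ball 1 (1+\<tau>)"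
    unfolding P_def by (intro holomorphic_on_diff holomorphic_on_const pole_lemma_open hol) auto
  have eqP: "P (of_real x) = of_real (\<integral>u. (1/(u*(1+u))) / (x + 1/u) \<partial>M)"
    if x: "0 < x" "x < 2" "x \<noteq> 1" for x
  proof -
    have G1: "\<Phi> 1 = of_real (a + b + (\<integral>u. 1/(1+u) \<partial>M))" using eq\<Phi>[of 1] by simp
    have "(\<integral>u. x/(1+x*u) \<partial>M) - (\<integral>u. 1/(1+u) \<partial>M) = (\<integral>u. x/(1+x*u) - 1/(1+u) \<partial>M)"
      using intw[of x] intw[of 1] x by (intro Bochner_Integration.integral_diff[symmetric]) auto
    also have "\<dots> = (\<integral>u. (x - 1) * ((1/(u*(1+u))) / (x + 1/u)) \<partial>M)"
    proof (rule integral_cong_AE)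
      show "AE u in M. x/(1+x*u) - 1/(1+u) = (x - 1) * ((1/(u*(1+u))) / (x + 1/u))"
        using pos
      proof eventually_elim
        case (elim u)
        have p: "0 < 1 + x*u" using elim x by (simp add: add_pos_pos)
        have r: "(1/(u*(1+u))) / (x + 1/u) = 1/((1+u)*(1+x*u))"
          using elim p by (rule alg_A1)
        have l: "x/(1+x*u) - 1/(1+u) = (x-1)/((1+x*u)*(1+u))"
          using elim p by (simp add: field_simps)
        show ?case unfolding r l by (simp add: mult.commute)
      qed
    qed measurable
    also have "\<dots> = (x - 1) * (\<integral>u. (1/(u*(1+u))) / (x + 1/u) \<partial>M)" by (rule integral_mult_right_zero)
    finally have I: "(\<integral>u. x/(1+x*u) \<partial>M) - (\<integral>u. 1/(1+u) \<partial>M) = (x - 1) * (\<integral>u. (1/(u*(1+u))) / (x + 1/u) \<partial>M)" .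
    have "x \<noteq> 1" using x by simp
    then have ne: "complex_of_real x \<noteq> 1" by (metis of_real_1 of_real_eq_iff)
    have "P (of_real x) = (\<Phi> (of_real x) - \<Phi> 1) / (of_real x - 1) - of_real b"
      using ne by (simp add: P_def)
    also have "\<dots> = of_real (((a + b*x + (\<integral>u. x/(1+x*u) \<partial>M)) - (a + b + (\<integral>u. 1/(1+u) \<partial>M))) / (x - 1) - b)"
      using eq\<Phi>[OF x(1,2)] G1 by simp
    also have "((a + b*x + (\<integral>u. x/(1+x*u) \<partial>M)) - (a + b + (\<integral>u. 1/(1+u) \<partial>M))) / (x - 1) - b
        = (\<integral>u. (1/(u*(1+u))) / (x + 1/u) \<partial>M)"
    proof -
      have "(a + b*x + (\<integral>u. x/(1+x*u) \<partial>M)) - (a + b + (\<integral>u. 1/(1+u) \<partial>M))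
           = b * (x - 1) + (x - 1) * (\<integral>u. (1/(u*(1+u))) / (x + 1/u) \<partial>M)"
        using I by (simp add: algebra_simps)
      then show ?thesis using x by (simp add: field_simps)
    qed
    finally show ?thesis .
  qed
  have main: "AE u in M. 1 + 1/u \<le> \<rho> \<longrightarrow> 1/(u*(1+u)) = 0" if "0 < \<rho>" "\<rho> < 1 + \<tau>" for \<rho>
  proof (rule core[of "\<lambda>u. 1/u" M "\<lambda>u. 1/(u*(1+u))" 1 P "1+\<tau>" \<rho>])
    show "AE u in M. 0 \<le> 1/u" using pos by eventually_elim auto
    show "AE u in M. 0 \<le> 1/(u*(1+u))" using pos by eventually_elim auto
    show "integrable M (\<lambda>u. 1/(u*(1+u)) / (1 + 1/u))"
    proof (rule int_bound_M[OF M, where C=1])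
      fix u :: real assume u: "0 < u"
      have e: "1/(u*(1+u)) / (1 + 1/u) = 1/(1+u) / (1+u)"
      proof -
        have "1/(u*(1+u)) / (1 + 1/u) = 1/((1+u)*(1+1*u))" by (rule alg_A1) (use u in auto)
        then show ?thesis by (simp only: mult_1 divide_divide_eq_left)
      qed
      have h: "1 / (1+u) / (1+u) \<le> 1/(1+u)" using u by (intro divide_right_mono) auto
      have "0 \<le> 1/(1+u)/(1+u)" using u by auto
      then show "\<bar>1/(u*(1+u)) / (1 + 1/u)\<bar> \<le> 1 * (1 / (1 + u))"
        using h unfolding e by (simp only: abs_of_nonneg mult_1)
    qed measurable
    show "P holomorphic_on ball (complex_of_real 1) (1 + \<tau>)" using holP by simp
    fix x :: real assume "0 < x" "x < 2 * 1" "x \<noteq> 1"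
    then show "P (complex_of_real x) = complex_of_real (\<integral>u. 1/(u*(1+u)) / (x + 1/u) \<partial>M)"
      using eqP by auto
  qed (insert that \<tau>, simp_all)
  show ?thesis unfolding supS_def
  proof (rule Sup_least, clarify)
    fix x assume x: "x \<in> supp M"
    show "ereal x \<le> ereal (1/\<tau>)"
    proof (rule ccontr)
      assume "\<not> ereal x \<le> ereal (1/\<tau>)"
      then have xt: "1/\<tau> < x" by simp
      have x0: "0 < x" using x by (simp add: supp_def)
      define d where "d = (1/x + \<tau>)/2"
      have d: "1/x < d" "d < \<tau>" "0 < d" using xt x0 \<tau> by (auto simp: d_def field_simps)
      have mm: "AE u in M. 1 + 1/u \<le> 1 + d \<longrightarrow> 1/(u*(1+u)) = 0"
        by (rule main) (insert d, simp_all)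
      have "AE u in M. u < 1/d"
        using mm pos
      proof eventually_elim
        case (elim u)
        have "u*(1+u) \<noteq> 0" using elim by (simp add: add_pos_pos)
        then have "1/(u*(1+u)) \<noteq> 0" by simp
        then have "\<not> (1 + 1/u \<le> 1 + d)" using elim by blast
        then have "d < 1/u" by simp
        then show ?case using elim d by (simp add: field_simps)
      qed
      then have "x \<le> 1/d" by (rule supp_le[OF s _ x])
      moreover have "1/d < x" using d x0 by (simp add: field_simps)
      ultimately show False by simp
    qed
  qed
qed


lemma AE_False_iff: "(AE x in M. False) \<longleftrightarrow> emeasure M (space M) = 0"
  using ae_filter_eq_bot_iff[of M] trivial_limit_def by metis

lemma int_pos:
  fixes f :: "'a \<Rightarrow> real"
  assumes int: "integrable \<mu> f" and pos: "AE x in \<mu>. 0 < f x" and nz: "emeasure \<mu> (space \<mu>) \<noteq> 0"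
  shows "0 < (\<integral>x. f x \<partial>\<mu>)"
proof -
  have nn: "AE x in \<mu>. 0 \<le> f x" using pos by eventually_elim auto
  have "0 \<le> (\<integral>x. f x \<partial>\<mu>)" by (rule integral_nonneg_AE[OF nn])
  moreover have "(\<integral>x. f x \<partial>\<mu>) \<noteq> 0"
  proof
    assume "(\<integral>x. f x \<partial>\<mu>) = 0"
    then have "AE x in \<mu>. f x = 0" using integral_nonneg_eq_0_iff_AE[OF int nn] by simp
    then have "AE x in \<mu>. False" using pos by eventually_elim auto
    then show False using nz AE_False_iff by blast
  qed
  ultimately show ?thesis by simp
qed

lemma exch_integrable:
  fixes \<mu> :: "real measure" and \<beta> \<gamma> :: "real \<Rightarrow> real" and x0 \<sigma> :: real and z :: complex
  assumes [measurable]: "\<beta> \<in> borel_measurable \<mu>" "\<gamma> \<in> borel_measurable \<mu>"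
   and A\<beta>: "AE u in \<mu>. \<sigma> \<le> \<beta> u" and A\<gamma>: "AE u in \<mu>. 0 \<le> \<gamma> u"
   and pos: "0 < x0 + \<sigma>" and int: "integrable \<mu> (\<lambda>u. \<gamma> u / (x0 + \<beta> u))"
   and z: "norm z < x0 + \<sigma>"
  shows "integrable \<mu> (\<lambda>u. of_real (\<gamma> u) / (of_real (x0 + \<beta> u) + z))"
proof (rule Bochner_Integration.integrable_bound)
  define \<theta> where "\<theta> = norm z / (x0 + \<sigma>)"
  have th0: "0 \<le> \<theta>" and th1: "\<theta> < 1" using z pos by (auto simp: \<theta>_def)
  show "integrable \<mu> (\<lambda>u. (1/(1-\<theta>)) * (\<gamma> u / (x0 + \<beta> u)))" by (intro integrable_mult_right int)
  show "(\<lambda>u. of_real (\<gamma> u) / (of_real (x0 + \<beta> u) + z)) \<in> borel_measurable \<mu>" by measurable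
  show "AE u in \<mu>. norm (of_real (\<gamma> u) / (of_real (x0 + \<beta> u) + z)) \<le> norm ((1/(1-\<theta>)) * (\<gamma> u / (x0 + \<beta> u)))"
    using A\<beta> A\<gamma>
  proof eventually_elim
    case (elim u)
    define a where "a = x0 + \<beta> u"
    have a: "x0 + \<sigma> \<le> a" "0 < a" using elim pos by (auto simp: a_def)
    have "norm z = \<theta> * (x0 + \<sigma>)" using pos by (simp add: \<theta>_def)
    also have "\<dots> \<le> \<theta> * a" using a th0 by (intro mult_left_mono) auto
    finally have nz: "norm z \<le> \<theta> * a" .
    have "(1 - \<theta>) * a = a - \<theta> * a" by (simp add: algebra_simps)
    also have "\<dots> \<le> norm (of_real a :: complex) - norm z" using nz a by simp
    also have "\<dots> \<le> norm (of_real a + z)" using norm_diff_ineq[of "of_real a" z] a by simp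
    finally have lb: "(1 - \<theta>) * a \<le> norm (of_real a + z)" .
    have lbp: "0 < (1 - \<theta>) * a" using th1 a by simp
    have "norm (of_real (\<gamma> u) / (of_real a + z)) = \<gamma> u / norm (of_real a + z)"
      using elim by (simp add: norm_divide)
    also have "\<dots> \<le> \<gamma> u / ((1 - \<theta>) * a)"
      using lb lbp elim by (intro divide_left_mono) (auto intro!: mult_pos_pos)
    also have "\<dots> = norm ((1/(1-\<theta>)) * (\<gamma> u / a))" using elim th1 a by simp
    finally show ?case by (simp add: a_def)
  qed
qed

lemma ext_hol:
  fixes \<mu> :: "real measure" and \<beta> \<gamma> :: "real \<Rightarrow> real" and x0 \<sigma> :: real
  assumes [measurable]: "\<beta> \<in> borel_measurable \<mu>" "\<gamma> \<in> borel_measurable \<mu>"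
   and A\<beta>: "AE u in \<mu>. \<sigma> \<le> \<beta> u" and A\<gamma>: "AE u in \<mu>. 0 \<le> \<gamma> u"
   and pos: "0 < x0 + \<sigma>" and int: "integrable \<mu> (\<lambda>u. \<gamma> u / (x0 + \<beta> u))"
  obtains H where "H holomorphic_on ball (of_real x0) (x0 + \<sigma>)"
    "\<And>z. z \<in> ball (of_real x0) (x0 + \<sigma>) \<Longrightarrow>
       H z = (\<integral>u. of_real (\<gamma> u) / (of_real (x0 + \<beta> u) + (z - of_real x0)) \<partial>\<mu>)"
proof -
  define e where "e n = (\<integral>u. \<gamma> u / (x0 + \<beta> u)^Suc n \<partial>\<mu>)" for n
  define F where "F = Abs_fps (\<lambda>n. complex_of_real ((-1)^n * e n))"
  have sm: "(\<lambda>n. fps_nth F n * z^n) sums (\<integral>u. of_real (\<gamma> u) / (of_real (x0 + \<beta> u) + z) \<partial>\<mu>)"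
    if "norm z < x0 + \<sigma>" for z
    unfolding F_def e_def fps_nth_Abs_fps
    by (rule exch) (use that pos A\<beta> A\<gamma> int in auto)
  have rad: "ereal (x0 + \<sigma>) \<le> fps_conv_radius F"
    unfolding fps_conv_radius_def
  proof (rule conv_radius_geI_ex')
    fix r :: real assume "0 < r" "ereal r < ereal (x0 + \<sigma>)"
    then show "summable (\<lambda>n. fps_nth F n * of_real r ^ n)"
      using sm[of "of_real r"] by (auto simp: sums_iff)
  qed
  define H where "H z = eval_fps F (z - of_real x0)" for z
  show ?thesis
  proof
    have "(eval_fps F \<circ> (\<lambda>z. z - of_real x0)) holomorphic_on ball (of_real x0) (x0 + \<sigma>)"
    proof (rule holomorphic_on_compose_gen)
      show "(\<lambda>z. z - of_real x0) holomorphic_on ball (of_real x0) (x0 + \<sigma>)" by (intro holomorphic_intros)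
      show "eval_fps F holomorphic_on ball 0 (x0 + \<sigma>)"
      proof (rule holomorphic_on_eval_fps)
        show "ball 0 (x0 + \<sigma>) \<subseteq> eball 0 (fps_conv_radius F)"
          using rad by (auto simp: eball_def intro: less_le_trans[of _ "ereal (x0 + \<sigma>)"])
      qed
      show "(\<lambda>z::complex. z - of_real x0) ` ball (of_real x0) (x0 + \<sigma>) \<subseteq> ball 0 (x0 + \<sigma>)"
      proof (rule image_subsetI)
        fix w :: complex assume "w \<in> ball (of_real x0) (x0 + \<sigma>)"
        then have "norm (of_real x0 - w) < x0 + \<sigma>" by (simp add: dist_norm)
        then have "norm (w - of_real x0) < x0 + \<sigma>" by (simp add: norm_minus_commute)
        then show "w - of_real x0 \<in> ball 0 (x0 + \<sigma>)" by simp
      qed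
    qed
    then show "H holomorphic_on ball (of_real x0) (x0 + \<sigma>)" by (simp add: H_def[abs_def] o_def)
    fix z :: complex assume "z \<in> ball (of_real x0) (x0 + \<sigma>)"
    then have "norm (z - of_real x0) < x0 + \<sigma>" by (simp add: dist_norm norm_minus_commute)
    then show "H z = (\<integral>u. of_real (\<gamma> u) / (of_real (x0 + \<beta> u) + (z - of_real x0)) \<partial>\<mu>)"
      using sm unfolding H_def eval_fps_def by (simp add: sums_iff)
  qed
qed

lemma im_neg:
  fixes \<mu> :: "real measure" and \<gamma> \<delta> :: "real \<Rightarrow> real" and z :: complex
  assumes int: "integrable \<mu> (\<lambda>u. of_real (\<gamma> u) / (of_real (\<delta> u) + z))"
    and pos: "AE u in \<mu>. 0 < \<gamma> u" and nz: "emeasure \<mu> (space \<mu>) \<noteq> 0" and iz: "Im z \<noteq> 0"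
  shows "Im (\<integral>u. of_real (\<gamma> u) / (of_real (\<delta> u) + z) \<partial>\<mu>) * Im z < 0"
proof -
  let ?h = "\<lambda>u. of_real (\<gamma> u) / (of_real (\<delta> u) + z)"
  have intIm: "integrable \<mu> (\<lambda>u. Im (?h u))"
    using integrable_bounded_linear[OF bounded_linear_Im int] by simp
  have "Im (\<integral>u. ?h u \<partial>\<mu>) = (\<integral>u. Im (?h u) \<partial>\<mu>)"
    using integral_bounded_linear[OF bounded_linear_Im int] by simp
  moreover have "0 < (\<integral>u. - (Im (?h u) * Im z) \<partial>\<mu>)"
  proof (rule int_pos[OF _ _ nz])
    show "integrable \<mu> (\<lambda>u. - (Im (?h u) * Im z))" using intIm by auto
    show "AE u in \<mu>. 0 < - (Im (?h u) * Im z)" using pos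
    proof eventually_elim
      case (elim u)
      define w where "w = of_real (\<delta> u) + z"
      have Imw: "Im w = Im z" by (simp add: w_def)
      have w0: "w \<noteq> 0" using iz Imw by auto
      have "Im (?h u) = - \<gamma> u * Im w / ((Re w)^2 + (Im w)^2)"
        unfolding w_def[symmetric] by (simp add: Im_divide)
      also have "(Re w)^2 + (Im w)^2 = (norm w)^2" by (simp add: cmod_power2)
      finally have "Im (?h u) = - \<gamma> u * Im z / (norm w)^2" using Imw by simp
      then have "- (Im (?h u) * Im z) = \<gamma> u * (Im z)^2 / (norm w)^2"
        by (simp add: power2_eq_square)
      moreover have "0 < \<gamma> u * (Im z)^2 / (norm w)^2" using elim iz w0 by auto
      ultimately show ?case by simp
    qed
  qed
  ultimately show ?thesis by simp
qed


lemma int_bound_AE: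
  fixes M :: "real measure"
  assumes M: "M \<in> Mclass" and [measurable]: "f \<in> borel_measurable borel"
    and b: "AE u in M. \<bar>f u\<bar> \<le> C * (1 / (1 + u))"
  shows "integrable M f"
proof -
  have s[measurable_cong]: "sets M = sets borel" using M by (simp add: Mclass_def)
  show ?thesis
  proof (rule Bochner_Integration.integrable_bound)
    show "integrable M (\<lambda>u. C * (1 / (1 + u)))" using Mclass_int[OF M] by (intro integrable_mult_right)
    show "f \<in> borel_measurable M" by measurable
    show "AE u in M. norm (f u) \<le> norm (C * (1 / (1 + u)))"
      using b
    proof eventually_elim
      case (elim u)
      have "\<bar>f u\<bar> \<le> C * (1 / (1 + u))" using elim by blast
      also have "\<dots> \<le> \<bar>C * (1 / (1 + u))\<bar>" by (rule abs_ge_self)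
      finally show ?case by (simp only: real_norm_def)
    qed
  qed
qed

lemma S_ext:
  fixes m :: "real measure" and \<sigma> :: real
  assumes m: "m \<in> Mclass" and \<sigma>: "infS m = ereal \<sigma>" "0 \<le> \<sigma>" and nz: "emeasure m (space m) \<noteq> 0"
  obtains HS where "HS holomorphic_on ball 1 (1+\<sigma>)"
    "\<And>x. -\<sigma> < x \<Longrightarrow> x < 2 + \<sigma> \<Longrightarrow> integrable m (\<lambda>u. 1/(x+u)) \<and>
          HS (of_real x) = of_real (\<integral>u. 1/(x+u) \<partial>m) \<and> 0 < (\<integral>u. 1/(x+u) \<partial>m)"
    "\<And>z. z \<in> ball 1 (1+\<sigma>) \<Longrightarrow> Im z \<noteq> 0 \<Longrightarrow> Im (HS z) * Im z < 0"
proof -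
  have s[measurable_cong]: "sets m = sets borel" using m by (simp add: Mclass_def)
  have pos: "AE u in m. 0 < u" by (rule Mclass_AE_pos[OF m])
  have Asg: "AE u in m. \<sigma> \<le> u" using AE_ge_infS[OF m] \<sigma> by simp
  have A1: "AE u in m. (0::real) \<le> 1" by simp
  have p: "0 < 1 + \<sigma>" using \<sigma> by simp
  have int: "integrable m (\<lambda>u. 1 / (1 + u))" by (rule Mclass_int[OF m])
  obtain H where H: "H holomorphic_on ball (of_real 1) (1 + \<sigma>)"
    "\<And>z. z \<in> ball (of_real 1) (1 + \<sigma>) \<Longrightarrow>
       H z = (\<integral>u. of_real 1 / (of_real (1 + u) + (z - of_real 1)) \<partial>m)"
    using ext_hol[of "\<lambda>u. u" m "\<lambda>u. 1" \<sigma> 1] Asg A1 p int by auto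
  have cint: "integrable m (\<lambda>u. of_real 1 / (of_real (1 + u) + (z - of_real 1)))"
    if "z \<in> ball 1 (1+\<sigma>)" for z :: complex
  proof (rule exch_integrable[of "\<lambda>u. u" m "\<lambda>u. 1" \<sigma> 1])
    show "norm (z - of_real 1) < 1 + \<sigma>" using that by (simp add: dist_norm norm_minus_commute)
  qed (use Asg p int in auto)
  show ?thesis
  proof
    show "H holomorphic_on ball 1 (1+\<sigma>)" using H(1) by simp
  next
    fix x :: real assume x: "-\<sigma> < x" "x < 2 + \<sigma>"
    have d: "dist (1::complex) (of_real x) = \<bar>1 - x\<bar>"
    proof -
      have "(1::complex) - of_real x = of_real (1 - x)" by simp
      then show ?thesis by (simp only: dist_norm norm_of_real)
    qed
    have xb: "of_real x \<in> ball (1::complex) (1+\<sigma>)"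
      unfolding mem_ball d using x p by (auto simp: abs_if)
    have e: "(\<lambda>u. of_real 1 / (of_real (1 + u) + (of_real x - of_real 1))) = (\<lambda>u. complex_of_real (1/(x+u)))"
      by (auto simp: add_ac)
    have ci: "integrable m (\<lambda>u. complex_of_real (1/(x+u)))" using cint[OF xb] unfolding e .
    then have ri: "integrable m (\<lambda>u. 1/(x+u))" by (rule complex_of_real_integrable_eq[THEN iffD1])
    have xb': "of_real x \<in> ball (of_real 1 :: complex) (1+\<sigma>)" using xb by simp
    have "H (of_real x) = (\<integral>u. of_real 1 / (of_real (1 + u) + (of_real x - of_real 1)) \<partial>m)"
      by (rule H(2)[OF xb'])
    also have "\<dots> = (\<integral>u. complex_of_real (1/(x+u)) \<partial>m)" by (simp only: e)
    also have "\<dots> = of_real (\<integral>u. 1/(x+u) \<partial>m)" by (rule integral_complex_of_real)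
    finally have "H (of_real x) = of_real (\<integral>u. 1/(x+u) \<partial>m)" .
    moreover have "0 < (\<integral>u. 1/(x+u) \<partial>m)"
    proof (rule int_pos[OF ri _ nz])
      show "AE u in m. 0 < 1/(x+u)" using Asg by eventually_elim (use x in auto)
    qed
    ultimately show "integrable m (\<lambda>u. 1/(x+u)) \<and> H (of_real x) = of_real (\<integral>u. 1/(x+u) \<partial>m) \<and> 0 < (\<integral>u. 1/(x+u) \<partial>m)"
      using ri by simp
  next
    fix z :: complex assume z: "z \<in> ball 1 (1+\<sigma>)" "Im z \<noteq> 0"
    have "Im (\<integral>u. of_real 1 / (of_real (1 + u) + (z - 1)) \<partial>m) * Im (z - 1) < 0"
      by (rule im_neg) (use cint[OF z(1)] nz z(2) in auto)
    then show "Im (H z) * Im z < 0" using H(2)[of z] z by simp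
  qed
qed

lemma L_ext:
  fixes m :: "real measure" and \<Sigma> :: real
  assumes m: "m \<in> Mclass" and \<Sigma>: "supS m = ereal \<Sigma>" "0 < \<Sigma>" and nz: "emeasure m (space m) \<noteq> 0"
  obtains HL where "HL holomorphic_on ball 1 (1 + 1/\<Sigma>)"
    "\<And>x. -(1/\<Sigma>) < x \<Longrightarrow> x < 2 + 1/\<Sigma> \<Longrightarrow> integrable m (\<lambda>u. 1/(1+x*u)) \<and>
          HL (of_real x) = of_real (\<integral>u. 1/(1+x*u) \<partial>m) \<and> 0 < (\<integral>u. 1/(1+x*u) \<partial>m)"
    "\<And>z. z \<in> ball 1 (1 + 1/\<Sigma>) \<Longrightarrow> Im z \<noteq> 0 \<Longrightarrow> Im (HL z) * Im z < 0"
proof -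
  have s[measurable_cong]: "sets m = sets borel" using m by (simp add: Mclass_def)
  have pos: "AE u in m. 0 < u" by (rule Mclass_AE_pos[OF m])
  have ASg: "AE u in m. u \<le> \<Sigma>" using AE_le_supS[OF m] \<Sigma> by simp
  have Abt: "AE u in m. 1/\<Sigma> \<le> 1/u" using ASg pos by eventually_elim (use \<Sigma> in \<open>auto simp: field_simps\<close>)
  have Agm: "AE u in m. 0 \<le> 1/u" using pos by eventually_elim auto
  have p: "0 < 1 + 1/\<Sigma>" using \<Sigma> by (simp add: add_pos_pos)
  have int: "integrable m (\<lambda>u. (1/u) / (1 + 1/u))"
  proof (rule int_bound_AE[OF m, where C=1])
    show "AE u in m. \<bar>(1/u) / (1 + 1/u)\<bar> \<le> 1 * (1 / (1 + u))"
      using pos by eventually_elim (auto simp: field_simps)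
  qed measurable
  obtain H where H: "H holomorphic_on ball (of_real 1) (1 + 1/\<Sigma>)"
    "\<And>z. z \<in> ball (of_real 1) (1 + 1/\<Sigma>) \<Longrightarrow>
       H z = (\<integral>u. of_real (1/u) / (of_real (1 + 1/u) + (z - of_real 1)) \<partial>m)"
    using ext_hol[of "\<lambda>u. 1/u" m "\<lambda>u. 1/u" "1/\<Sigma>" 1] Abt Agm p int by auto
  have cint: "integrable m (\<lambda>u. of_real (1/u) / (of_real (1 + 1/u) + (z - of_real 1)))"
    if "z \<in> ball 1 (1+1/\<Sigma>)" for z :: complex
  proof (rule exch_integrable[of "\<lambda>u. 1/u" m "\<lambda>u. 1/u" "1/\<Sigma>" 1])
    show "norm (z - of_real 1) < 1 + 1/\<Sigma>" using that by (simp add: dist_norm norm_minus_commute)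
  qed (use Abt Agm p int in auto)
  show ?thesis
  proof
    show "H holomorphic_on ball 1 (1+1/\<Sigma>)" using H(1) by simp
  next
    fix x :: real assume x: "-(1/\<Sigma>) < x" "x < 2 + 1/\<Sigma>"
    have d: "dist (1::complex) (of_real x) = \<bar>1 - x\<bar>"
    proof -
      have "(1::complex) - of_real x = of_real (1 - x)" by simp
      then show ?thesis by (simp only: dist_norm norm_of_real)
    qed
    have xb: "of_real x \<in> ball (1::complex) (1+1/\<Sigma>)"
      unfolding mem_ball d using x p by (auto simp: abs_if)
    have Apos: "AE u in m. 0 < 1 + x*u"
      using ASg pos
    proof eventually_elim
      case (elim u)
      show ?case
      proof (cases "0 \<le> x")
        case True then show ?thesis using elim by (simp add: add_pos_nonneg)
      next
        case False
        have "-(1/\<Sigma>) * u < x * u" using x elim by (intro mult_strict_right_mono) auto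
        moreover have "-(1/\<Sigma>) * u \<ge> -1" using elim \<Sigma> by (simp add: field_simps)
        ultimately show ?thesis by linarith
      qed
    qed
    have e: "AE u in m. of_real (1/u) / (of_real (1 + 1/u) + (of_real x - of_real 1)) = complex_of_real (1/(1+x*u))"
      using Apos pos
    proof eventually_elim
      case (elim u)
      have "(1/u) / (1 + 1/u + (x - 1)) = 1/(1+x*u)"
      proof -
        have "1 + 1/u + (x - 1) = (1 + x*u)/u" using elim by (simp add: field_simps)
        then show ?thesis using elim by simp
      qed
      moreover have "complex_of_real ((1/u) / (1 + 1/u + (x - 1))) = of_real (1/u) / of_real (1 + 1/u + (x - 1))"
        by (rule of_real_divide)
      moreover have "complex_of_real (1 + 1/u + (x - 1)) = of_real (1 + 1/u) + (of_real x - of_real 1)"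
        by (simp only: of_real_add of_real_diff)
      ultimately show ?case by simp
    qed
    have ci: "integrable m (\<lambda>u. complex_of_real (1/(1+x*u)))"
      using cint[OF xb] by (rule integrable_cong_AE_imp) (use e in \<open>auto intro: AE_symmetric\<close>)
    then have ri: "integrable m (\<lambda>u. 1/(1+x*u))" by (rule complex_of_real_integrable_eq[THEN iffD1])
    have xb': "of_real x \<in> ball (of_real 1 :: complex) (1+1/\<Sigma>)" using xb by simp
    have "H (of_real x) = (\<integral>u. of_real (1/u) / (of_real (1 + 1/u) + (of_real x - of_real 1)) \<partial>m)"
      by (rule H(2)[OF xb'])
    also have "\<dots> = (\<integral>u. complex_of_real (1/(1+x*u)) \<partial>m)"
      by (rule integral_cong_AE[OF _ _ e]) measurable
    also have "\<dots> = of_real (\<integral>u. 1/(1+x*u) \<partial>m)" by (rule integral_complex_of_real)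
    finally have "H (of_real x) = of_real (\<integral>u. 1/(1+x*u) \<partial>m)" .
    moreover have "0 < (\<integral>u. 1/(1+x*u) \<partial>m)"
    proof (rule int_pos[OF ri _ nz])
      show "AE u in m. 0 < 1/(1+x*u)" using Apos by eventually_elim auto
    qed
    ultimately show "integrable m (\<lambda>u. 1/(1+x*u)) \<and> H (of_real x) = of_real (\<integral>u. 1/(1+x*u) \<partial>m) \<and> 0 < (\<integral>u. 1/(1+x*u) \<partial>m)"
      using ri by simp
  next
    fix z :: complex assume z: "z \<in> ball 1 (1+1/\<Sigma>)" "Im z \<noteq> 0"
    have "Im (\<integral>u. of_real (1/u) / (of_real (1 + 1/u) + (z - 1)) \<partial>m) * Im (z - 1) < 0"
      by (rule im_neg) (use cint[OF z(1)] nz z(2) pos in \<open>auto elim!: eventually_mono\<close>)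
    then show "Im (H z) * Im z < 0" using H(2)[of z] z by simp
  qed
qed


lemma real_of_Im0: "Im z = 0 \<Longrightarrow> z = complex_of_real (Re z)"
  by (simp add: complex_eq_iff)

lemma dist1_real: "dist (1::complex) (of_real x) = \<bar>1 - x\<bar>"
proof -
  have "(1::complex) - of_real x = of_real (1 - x)" by simp
  then show ?thesis by (simp only: dist_norm norm_of_real)
qed

lemma ball1_real: "z \<in> ball (1::complex) R \<Longrightarrow> Im z = 0 \<Longrightarrow> 1 - R < Re z \<and> Re z < 1 + R"
proof -
  assume z: "z \<in> ball 1 R" "Im z = 0"
  have "dist (1::complex) (of_real (Re z)) < R" using z(1) real_of_Im0[OF z(2)] by (simp add: mem_ball)
  then show ?thesis unfolding dist1_real by (auto simp: abs_if split: if_splits)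
qed

locale setting =
  fixes q r a b :: real and m M :: "real measure"
  assumes q: "q \<ge> 0" and r: "r \<ge> 0"
    and m: "m \<in> Mclass" and m_nz: "emeasure m (space m) \<noteq> 0"
    and a: "a \<ge> 0" and b: "b \<ge> 0" and M: "M \<in> Mclass"
    and rep: "\<And>l::real. l > 0 \<Longrightarrow>
       q + r / l + (\<integral>u. 1 / (l + u) \<partial>m)
         = 1 / (a * l + b + (\<integral>u. l / (l + u) \<partial>M))"
begin

lemma sm[measurable_cong]: "sets m = sets borel" using m by (simp add: Mclass_def)
lemma sM[measurable_cong]: "sets M = sets borel" using M by (simp add: Mclass_def)
lemma posm: "AE u in m. 0 < u" by (rule Mclass_AE_pos[OF m])
lemma posM: "AE u in M. 0 < u" by (rule Mclass_AE_pos[OF M])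
lemma suppm: "supp m \<noteq> {}" by (rule supp_nonempty[OF m m_nz])

definition sig where "sig = real_of_ereal (infS m)"
lemma sig: "infS m = ereal sig" "0 \<le> sig"
proof -
  obtain s where "infS m = ereal s" "0 \<le> s" using infS_fin[OF suppm] by blast
  then show "infS m = ereal sig" "0 \<le> sig" by (auto simp: sig_def)
qed
lemma Asig: "AE u in m. sig \<le> u" using AE_ge_infS[OF m] sig by simp

lemma intI: "0 < x \<Longrightarrow> integrable m (\<lambda>u. 1/(x+u))"
proof (rule int_bound_M[OF m, where C="max 1 (1/x)"])
  fix u :: real assume x: "0 < x" and u: "0 < u"
  have "1 + u \<le> max 1 (1/x) * (x + u)"
  proof (cases "1 \<le> x")
    case True then show ?thesis using u by (simp add: max_def)
  next
    case False
    then have "1 + u \<le> 1 + u/x" using x u by (simp add: field_simps)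
    also have "\<dots> = (1/x) * (x+u)" using x by (simp add: field_simps)
    finally show ?thesis using x u by (simp add: max_def)
  qed
  then show "\<bar>1 / (x + u)\<bar> \<le> max 1 (1/x) * (1 / (1 + u))" using x u by (simp add: field_simps)
qed measurable

lemma Ipos: "0 < x \<Longrightarrow> 0 < (\<integral>u. 1/(x+u) \<partial>m)"
  by (rule int_pos[OF intI _ m_nz]) (use posm in \<open>auto elim!: eventually_mono\<close>)

lemma Mnn: "0 < x \<Longrightarrow> 0 \<le> (\<integral>u. x/(x+u) \<partial>M)"
  by (rule integral_nonneg_AE) (use posM in \<open>auto elim!: eventually_mono\<close>)

lemma fpos: "0 < x \<Longrightarrow> 0 < q + r/x + (\<integral>u. 1/(x+u) \<partial>m)"
proof -
  assume x: "0 < x"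
  have "0 \<le> r/x" using r x by simp
  then show ?thesis using Ipos[OF x] q by linarith
qed

lemma grep: "0 < x \<Longrightarrow> a*x + b + (\<integral>u. x/(x+u) \<partial>M) = 1 / (q + r/x + (\<integral>u. 1/(x+u) \<partial>m))"
proof -
  assume x: "0 < x"
  define D where "D = a*x + b + (\<integral>u. x/(x+u) \<partial>M)"
  have "q + r/x + (\<integral>u. 1/(x+u) \<partial>m) = 1/D" using rep[OF x] by (simp add: D_def)
  moreover have "D \<noteq> 0" using fpos[OF x] calculation by auto
  ultimately show ?thesis by (simp add: D_def)
qed

lemma gpos: "0 < x \<Longrightarrow> 0 < a*x + b + (\<integral>u. x/(x+u) \<partial>M)"
  using grep fpos by simp

lemma q0: "0 < a \<Longrightarrow> q = 0"
proof (rule ccontr)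
  assume a: "0 < a" "q \<noteq> 0"
  then have qp: "0 < q" using q by simp
  define x where "x = 2 / (a*q)"
  have x: "0 < x" using a qp by (simp add: x_def)
  have "a * x \<le> a*x + b + (\<integral>u. x/(x+u) \<partial>M)" using Mnn[OF x] b by simp
  also have "\<dots> = 1 / (q + r/x + (\<integral>u. 1/(x+u) \<partial>m))" by (rule grep[OF x])
  also have "\<dots> \<le> 1 / q"
  proof (rule divide_left_mono)
    have "0 \<le> r/x" using r x by simp
    then show "q \<le> q + r/x + (\<integral>u. 1/(x+u) \<partial>m)" using Ipos[OF x] by linarith
    show "0 < (q + r/x + (\<integral>u. 1/(x+u) \<partial>m)) * q" using fpos[OF x] qp by simp
  qed simp
  finally have "a * x \<le> 1/q" .
  then show False using a qp by (simp add: x_def field_simps)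
qed

lemma r0: "0 < b \<Longrightarrow> r = 0"
proof (rule ccontr)
  assume bb: "0 < b" "r \<noteq> 0"
  then have rp: "0 < r" using r by simp
  define x where "x = b * r / 2"
  have x: "0 < x" using bb rp by (simp add: x_def)
  have "b \<le> a*x + b + (\<integral>u. x/(x+u) \<partial>M)" using Mnn[OF x] a x by simp
  also have "\<dots> = 1 / (q + r/x + (\<integral>u. 1/(x+u) \<partial>m))" by (rule grep[OF x])
  also have "\<dots> \<le> 1 / (r/x)"
  proof (rule divide_left_mono)
    show "r/x \<le> q + r/x + (\<integral>u. 1/(x+u) \<partial>m)" using Ipos[OF x] q by linarith
    show "0 < (q + r/x + (\<integral>u. 1/(x+u) \<partial>m)) * (r/x)" using fpos[OF x] rp x by simp
  qed simp
  finally have "b \<le> x / r" by simp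
  then show False using bb rp by (simp add: x_def field_simps)
qed

end


context setting begin

lemma lowerA: assumes r0: "r = 0" shows "infS m \<le> infS M"
proof (cases "sig = 0")
  case True then show ?thesis using sig infS_ge0[of M] by (simp add: zero_ereal_def)
next
  case False
  then have sp: "0 < sig" using sig by simp
  obtain HS where HS: "HS holomorphic_on ball 1 (1+sig)"
    "\<And>x. -sig < x \<Longrightarrow> x < 2 + sig \<Longrightarrow> integrable m (\<lambda>u. 1/(x+u)) \<and>
          HS (of_real x) = of_real (\<integral>u. 1/(x+u) \<partial>m) \<and> 0 < (\<integral>u. 1/(x+u) \<partial>m)"
    "\<And>z. z \<in> ball 1 (1+sig) \<Longrightarrow> Im z \<noteq> 0 \<Longrightarrow> Im (HS z) * Im z < 0"
    using S_ext[OF m sig m_nz] by blast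
  have nz: "of_real q + HS z \<noteq> 0" if z: "z \<in> ball 1 (1+sig)" for z
  proof (cases "Im z = 0")
    case False
    then have "Im (HS z) \<noteq> 0" using HS(3)[OF z] by auto
    then show ?thesis by (auto simp: complex_eq_iff)
  next
    case True
    define x where "x = Re z"
    have zx: "z = of_real x" using real_of_Im0[OF True] by (simp add: x_def)
    have x: "-sig < x" "x < 2 + sig" using ball1_real[OF z True] by (auto simp: x_def)
    have "HS z = of_real (\<integral>u. 1/(x+u) \<partial>m)" "0 < (\<integral>u. 1/(x+u) \<partial>m)" using HS(2)[OF x] zx by auto
    then have "of_real q + HS z = of_real (q + (\<integral>u. 1/(x+u) \<partial>m))" "0 < q + (\<integral>u. 1/(x+u) \<partial>m)"
      using q by auto
    then show ?thesis by (metis of_real_eq_0_iff order_less_irrefl)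
  qed
  define G where "G z = 1 / (of_real q + HS z)" for z
  have holG: "G holomorphic_on ball 1 (1+sig)"
    unfolding G_def by (intro holomorphic_on_divide holomorphic_intros HS(1) nz)
  have eqG: "G (of_real x) = of_real (a*x + b + (\<integral>u. x/(x+u) \<partial>M))" if x: "0 < x" "x < 2" for x
  proof -
    have x': "-sig < x" "x < 2 + sig" using x sig by auto
    have "G (of_real x) = 1 / (of_real q + of_real (\<integral>u. 1/(x+u) \<partial>m))" using HS(2)[OF x'] by (simp add: G_def)
    also have "\<dots> = of_real (1 / (q + r/x + (\<integral>u. 1/(x+u) \<partial>m)))" using r0 by simp
    also have "\<dots> = of_real (a*x + b + (\<integral>u. x/(x+u) \<partial>M))" using grep[OF x(1)] by simp
    finally show ?thesis .
  qed
  have "ereal sig \<le> infS M" by (rule lowerM[OF M sp holG eqG])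
  then show ?thesis using sig by simp
qed

lemma set_s_pos_r0:
  assumes r0: "r = 0" and s: "ereal s < infS m" "s * (q + (\<integral>u. 1 / (u - s) \<partial>m)) < r"
  shows "s \<le> 0"
proof (rule ccontr)
  assume "\<not> s \<le> 0"
  then have sp: "0 < s" by simp
  have ss: "s < sig" using s sig by simp
  obtain HS where HS: "HS holomorphic_on ball 1 (1+sig)"
    "\<And>x. -sig < x \<Longrightarrow> x < 2 + sig \<Longrightarrow> integrable m (\<lambda>u. 1/(x+u)) \<and>
          HS (of_real x) = of_real (\<integral>u. 1/(x+u) \<partial>m) \<and> 0 < (\<integral>u. 1/(x+u) \<partial>m)"
    "\<And>z. z \<in> ball 1 (1+sig) \<Longrightarrow> Im z \<noteq> 0 \<Longrightarrow> Im (HS z) * Im z < 0"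
    using S_ext[OF m sig m_nz] by blast
  have "0 < (\<integral>u. 1/(-s+u) \<partial>m)" using HS(2)[of "-s"] ss sp by auto
  then have "0 < (\<integral>u. 1/(u - s) \<partial>m)" by simp
  then have "0 < s * (q + (\<integral>u. 1 / (u - s) \<partial>m))" using sp q by simp
  then show False using s r0 by simp
qed


lemma sminus_le: "s_minus q r m \<le> infS m"
  unfolding s_minus_def by (rule Sup_least) auto

lemma sminus_ge0: "0 \<le> s_minus q r m"
proof (rule dense_le_bounded[of "ereal (-1)"])
  show "ereal (-1) < 0" by (simp add: zero_ereal_def)
  fix w :: ereal assume w: "ereal (-1) < w" "w < 0"
  then obtain s where ws: "w = ereal s" by (cases w) auto
  have s: "-1 < s" "s < 0" using w ws by (auto simp: zero_ereal_def)
  obtain HS where HS: "HS holomorphic_on ball 1 (1+sig)"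
    "\<And>x. -sig < x \<Longrightarrow> x < 2 + sig \<Longrightarrow> integrable m (\<lambda>u. 1/(x+u)) \<and>
          HS (of_real x) = of_real (\<integral>u. 1/(x+u) \<partial>m) \<and> 0 < (\<integral>u. 1/(x+u) \<partial>m)"
    "\<And>z. z \<in> ball 1 (1+sig) \<Longrightarrow> Im z \<noteq> 0 \<Longrightarrow> Im (HS z) * Im z < 0"
    using S_ext[OF m sig m_nz] by blast
  have "0 < (\<integral>u. 1/(-s+u) \<partial>m)" using HS(2)[of "-s"] s sig by auto
  then have J: "0 < (\<integral>u. 1/(u - s) \<partial>m)" by simp
  have "s * (q + (\<integral>u. 1 / (u - s) \<partial>m)) < 0" using J q s by (simp add: mult_neg_pos add_nonneg_pos)
  then have "s \<in> {s. ereal s < infS m \<and> s * (q + (\<integral>u. 1 / (u - s) \<partial>m)) < r}"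
    using r s sig by auto
  then show "w \<le> s_minus q r m" unfolding s_minus_def ws by (auto intro: Sup_upper)
qed

lemma lowerB: "s_minus q r m \<le> infS M"
proof (cases "s_minus q r m \<le> 0")
  case True then show ?thesis using infS_ge0[of M] by (rule order_trans)
next
  case False
  then have sp: "0 < s_minus q r m" by simp
  have rp: "0 < r"
  proof (rule ccontr)
    assume "\<not> 0 < r"
    then have r0: "r = 0" using r by simp
    have "s_minus q r m \<le> 0" unfolding s_minus_def
      by (rule Sup_least) (auto dest: set_s_pos_r0[OF r0] simp: zero_ereal_def)
    then show False using False by simp
  qed
  have "s_minus q r m \<le> ereal sig" using sminus_le sig by simp
  then obtain t where t: "s_minus q r m = ereal t" using sp by (cases "s_minus q r m") auto
  have t0: "0 < t" "t \<le> sig" using t sp sminus_le sig by auto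
  obtain HS where HS: "HS holomorphic_on ball 1 (1+sig)"
    "\<And>x. -sig < x \<Longrightarrow> x < 2 + sig \<Longrightarrow> integrable m (\<lambda>u. 1/(x+u)) \<and>
          HS (of_real x) = of_real (\<integral>u. 1/(x+u) \<partial>m) \<and> 0 < (\<integral>u. 1/(x+u) \<partial>m)"
    "\<And>z. z \<in> ball 1 (1+sig) \<Longrightarrow> Im z \<noteq> 0 \<Longrightarrow> Im (HS z) * Im z < 0"
    using S_ext[OF m sig m_nz] by blast
  have sub: "ball (1::complex) (1+t) \<subseteq> ball 1 (1+sig)" using t0 by auto
  define kC where "kC z = of_real r + z * (of_real q + HS z)" for z
  have nz: "kC z \<noteq> 0" if z: "z \<in> ball 1 (1+t)" for z
  proof (cases "Im z = 0")
    case False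
    then have z0: "z \<noteq> 0" by auto
    define w where "w = of_real q + HS z + of_real r / z"
    have kw: "kC z = z * w" using z0 by (simp add: kC_def w_def field_simps)
    have "Im (of_real r / z) * Im z = - r * (Im z)^2 / ((Re z)^2 + (Im z)^2)"
      by (simp add: Im_divide power2_eq_square)
    moreover have "0 \<le> r * (Im z)^2 / ((Re z)^2 + (Im z)^2)" using r by simp
    ultimately have "Im (of_real r / z) * Im z \<le> 0" by simp
    moreover have "Im (HS z) * Im z < 0" using HS(3)[of z] z sub False by auto
    ultimately have "Im w * Im z < 0" by (simp add: w_def algebra_simps)
    then have "w \<noteq> 0" by auto
    then show ?thesis using kw z0 by simp
  next
    case True
    define x where "x = Re z"
    have zx: "z = of_real x" using real_of_Im0[OF True] by (simp add: x_def)
    have x: "-t < x" "x < 2 + t" using ball1_real[OF z True] by (auto simp: x_def)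
    have x': "-sig < x" "x < 2 + sig" using x t0 by auto
    have I: "HS z = of_real (\<integral>u. 1/(x+u) \<partial>m)" "0 < (\<integral>u. 1/(x+u) \<partial>m)"
      "integrable m (\<lambda>u. 1/(x+u))" using HS(2)[OF x'] zx by auto
    have kx: "kC z = of_real (r + x * (q + (\<integral>u. 1/(x+u) \<partial>m)))" using I zx by (simp add: kC_def)
    have "0 < r + x * (q + (\<integral>u. 1/(x+u) \<partial>m))"
    proof (cases "0 \<le> x")
      case True then show ?thesis using rp I q by (simp add: add_pos_nonneg)
    next
      case False
      define s where "s = -x"
      have s: "0 < s" "s < t" using False x by (auto simp: s_def)
      have "ereal s < Sup (ereal ` {s. ereal s < infS m \<and> s * (q + (\<integral>u. 1 / (u - s) \<partial>m)) < r})"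
        using t s by (simp add: s_minus_def[symmetric])
      then obtain s' where s': "ereal s' < infS m" "s' * (q + (\<integral>u. 1 / (u - s') \<partial>m)) < r" "s < s'"
        by (auto simp: less_Sup_iff)
      have s'sig: "s' < sig" using s' sig by simp
      have I': "integrable m (\<lambda>u. 1/(-s'+u))" "0 < (\<integral>u. 1/(-s'+u) \<partial>m)"
        using HS(2)[of "-s'"] s s' s'sig by auto
      have Js: "(\<integral>u. 1/(x+u) \<partial>m) \<le> (\<integral>u. 1/(-s'+u) \<partial>m)"
      proof (rule integral_mono_AE[OF I(3) I'(1)])
        show "AE u in m. 1/(x+u) \<le> 1/(-s'+u)" using Asig
          by eventually_elim (use s s' s'sig in \<open>auto simp: s_def intro!: divide_left_mono\<close>)
      qed
      have e: "(\<integral>u. 1 / (u - s') \<partial>m) = (\<integral>u. 1/(-s'+u) \<partial>m)" by simp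
      have "s * (q + (\<integral>u. 1/(x+u) \<partial>m)) \<le> s * (q + (\<integral>u. 1/(-s'+u) \<partial>m))"
        using Js s by (intro mult_left_mono) auto
      also have "\<dots> \<le> s' * (q + (\<integral>u. 1/(-s'+u) \<partial>m))"
        using s s' I' q by (intro mult_right_mono) auto
      also have "\<dots> < r" using s'(2) by (simp only: e)
      finally show ?thesis by (simp add: s_def)
    qed
    then show ?thesis using kx by (metis of_real_eq_0_iff order_less_irrefl)
  qed
  define G where "G z = z / kC z" for z
  have holG: "G holomorphic_on ball 1 (1+t)"
    unfolding G_def kC_def
    by (intro holomorphic_on_divide holomorphic_intros holomorphic_on_subset[OF HS(1) sub])
       (use nz in \<open>auto simp: kC_def\<close>)
  have eqG: "G (of_real x) = of_real (a*x + b + (\<integral>u. x/(x+u) \<partial>M))" if x: "0 < x" "x < 2" for x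
  proof -
    have x': "-sig < x" "x < 2 + sig" using x sig by auto
    have "G (of_real x) = of_real x / (of_real r + of_real x * (of_real q + of_real (\<integral>u. 1/(x+u) \<partial>m)))"
      using HS(2)[OF x'] by (simp add: G_def kC_def)
    also have "\<dots> = of_real (x / (r + x * (q + (\<integral>u. 1/(x+u) \<partial>m))))" by simp
    also have "x / (r + x * (q + (\<integral>u. 1/(x+u) \<partial>m))) = 1 / (q + r/x + (\<integral>u. 1/(x+u) \<partial>m))"
      using x by (simp add: field_simps)
    also have "\<dots> = a*x + b + (\<integral>u. x/(x+u) \<partial>M)" using grep[OF x(1)] by simp
    finally show ?thesis .
  qed
  have "ereal t \<le> infS M" by (rule lowerM[OF M t0(1) holG eqG])
  then show ?thesis using t by simp
qed

end


context setting begin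

lemma inv_rel:
  assumes w: "0 < w"
  shows "a + b*w + (\<integral>u. w/(1+w*u) \<partial>M) = w / (q + r*w + w * (\<integral>u. 1/(1+w*u) \<partial>m))"
proof -
  define x where "x = 1/w"
  have x: "0 < x" using w by (simp add: x_def)
  have e1: "(\<integral>u. x/(x+u) \<partial>M) = (\<integral>u. 1/(1+w*u) \<partial>M)"
  proof (rule integral_cong_AE)
    show "AE u in M. x/(x+u) = 1/(1+w*u)" using posM
    proof eventually_elim
      case (elim u)
      have "0 < 1 + w*u" using elim w by (simp add: add_pos_pos)
      then show ?case using elim w by (simp add: x_def field_simps)
    qed
  qed measurable
  have e2: "(\<integral>u. 1/(x+u) \<partial>m) = w * (\<integral>u. 1/(1+w*u) \<partial>m)"
  proof -
    have "(\<integral>u. 1/(x+u) \<partial>m) = (\<integral>u. w * (1/(1+w*u)) \<partial>m)"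
    proof (rule integral_cong_AE)
      show "AE u in m. 1/(x+u) = w * (1/(1+w*u))" using posm
      proof eventually_elim
        case (elim u)
        have "0 < 1 + w*u" using elim w by (simp add: add_pos_pos)
        then show ?case using elim w by (simp add: x_def field_simps)
      qed
    qed measurable
    also have "\<dots> = w * (\<integral>u. 1/(1+w*u) \<partial>m)" by (rule integral_mult_right_zero)
    finally show ?thesis .
  qed
  have "a*x + b + (\<integral>u. x/(x+u) \<partial>M) = 1 / (q + r/x + (\<integral>u. 1/(x+u) \<partial>m))" by (rule grep[OF x])
  then have "a/w + b + (\<integral>u. 1/(1+w*u) \<partial>M) = 1 / (q + r*w + w * (\<integral>u. 1/(1+w*u) \<partial>m))"
    unfolding e1 e2 by (simp add: x_def)
  then have "w * (a/w + b + (\<integral>u. 1/(1+w*u) \<partial>M)) = w / (q + r*w + w * (\<integral>u. 1/(1+w*u) \<partial>m))"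
    by simp
  moreover have "w * (a/w + b + (\<integral>u. 1/(1+w*u) \<partial>M)) = a + b*w + (\<integral>u. w/(1+w*u) \<partial>M)"
  proof -
    have "(\<integral>u. w/(1+w*u) \<partial>M) = (\<integral>u. w * (1/(1+w*u)) \<partial>M)" by simp
    also have "\<dots> = w * (\<integral>u. 1/(1+w*u) \<partial>M)" by (rule integral_mult_right_zero)
    finally have "(\<integral>u. w/(1+w*u) \<partial>M) = w * (\<integral>u. 1/(1+w*u) \<partial>M)" .
    moreover have "w * (a/w + b + (\<integral>u. 1/(1+w*u) \<partial>M)) = a + b*w + w * (\<integral>u. 1/(1+w*u) \<partial>M)"
      using w by (simp add: algebra_simps)
    ultimately show ?thesis by simp
  qed
  ultimately show ?thesis by simp
qed

lemma supS_fin: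
  assumes "supS m \<noteq> \<infinity>" obtains S where "supS m = ereal S" "0 < S"
proof -
  have p: "0 < supS m" by (rule supS_pos[OF suppm])
  then obtain S where "supS m = ereal S" using assms by (cases "supS m") auto
  then show ?thesis using that p by auto
qed

lemma upperA: assumes q0: "q = 0" shows "supS M \<le> supS m"
proof (cases "supS m = \<infinity>")
  case True then show ?thesis by simp
next
  case False
  then obtain S where S: "supS m = ereal S" "0 < S" by (rule supS_fin)
  obtain HL where HL: "HL holomorphic_on ball 1 (1 + 1/S)"
    "\<And>x. -(1/S) < x \<Longrightarrow> x < 2 + 1/S \<Longrightarrow> integrable m (\<lambda>u. 1/(1+x*u)) \<and>
          HL (of_real x) = of_real (\<integral>u. 1/(1+x*u) \<partial>m) \<and> 0 < (\<integral>u. 1/(1+x*u) \<partial>m)"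
    "\<And>z. z \<in> ball 1 (1 + 1/S) \<Longrightarrow> Im z \<noteq> 0 \<Longrightarrow> Im (HL z) * Im z < 0"
    using L_ext[OF m S m_nz] by blast
  have Sp: "0 < 1/S" using S by simp
  have nz: "of_real r + HL z \<noteq> 0" if z: "z \<in> ball 1 (1 + 1/S)" for z
  proof (cases "Im z = 0")
    case False
    then have "Im (HL z) \<noteq> 0" using HL(3)[OF z] by auto
    then show ?thesis by (auto simp: complex_eq_iff)
  next
    case True
    define x where "x = Re z"
    have zx: "z = of_real x" using real_of_Im0[OF True] by (simp add: x_def)
    have x: "-(1/S) < x" "x < 2 + 1/S" using ball1_real[OF z True] by (auto simp: x_def)
    have "HL z = of_real (\<integral>u. 1/(1+x*u) \<partial>m)" "0 < (\<integral>u. 1/(1+x*u) \<partial>m)" using HL(2)[OF x] zx by auto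
    then have "of_real r + HL z = of_real (r + (\<integral>u. 1/(1+x*u) \<partial>m))" "0 < r + (\<integral>u. 1/(1+x*u) \<partial>m)"
      using r by auto
    then show ?thesis by (metis of_real_eq_0_iff order_less_irrefl)
  qed
  define \<Phi> where "\<Phi> z = 1 / (of_real r + HL z)" for z
  have hol: "\<Phi> holomorphic_on ball 1 (1 + 1/S)"
    unfolding \<Phi>_def by (intro holomorphic_on_divide holomorphic_intros HL(1) nz)
  have eq: "\<Phi> (of_real w) = of_real (a + b*w + (\<integral>u. w/(1+w*u) \<partial>M))" if w: "0 < w" "w < 2" for w
  proof -
    have w'1: "-(1/S) < w" using w Sp by linarith
    have w'2: "w < 2 + 1/S" using w Sp by linarith
    note w' = w'1 w'2
    have "\<Phi> (of_real w) = 1 / (of_real r + of_real (\<integral>u. 1/(1+w*u) \<partial>m))" using HL(2)[OF w'] by (simp add: \<Phi>_def)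
    also have "\<dots> = of_real (1 / (r + (\<integral>u. 1/(1+w*u) \<partial>m)))" by simp
    also have "1 / (r + (\<integral>u. 1/(1+w*u) \<partial>m)) = w / (q + r*w + w * (\<integral>u. 1/(1+w*u) \<partial>m))"
    proof -
      have "q + r*w + w * (\<integral>u. 1/(1+w*u) \<partial>m) = w * (r + (\<integral>u. 1/(1+w*u) \<partial>m))"
        using q0 by (simp add: algebra_simps)
      moreover have "w / (w * (r + (\<integral>u. 1/(1+w*u) \<partial>m))) = 1 / (r + (\<integral>u. 1/(1+w*u) \<partial>m))"
        using w by simp
      ultimately show ?thesis by simp
    qed
    also have "\<dots> = a + b*w + (\<integral>u. w/(1+w*u) \<partial>M)" using inv_rel[OF w(1)] by simp
    finally show ?thesis .
  qed
  have "supS M \<le> ereal (1/(1/S))" by (rule upperM[OF M Sp hol eq])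
  then show ?thesis using S by simp
qed

lemma splus_inf: assumes q0: "q = 0" shows "s_plus q r m = \<infinity>"
proof -
  have e: "{s. supS m < ereal s \<and> s * (q - (\<integral>u. 1 / (s - u) \<partial>m)) > r} = {}"
  proof (rule equals0I)
    fix s assume "s \<in> {s. supS m < ereal s \<and> s * (q - (\<integral>u. 1 / (s - u) \<partial>m)) > r}"
    then have s: "supS m < ereal s" "s * (q - (\<integral>u. 1 / (s - u) \<partial>m)) > r" by auto
    have sp: "0 < s" using supS_pos[OF suppm] s(1) by (metis ereal_less(2) less_trans zero_ereal_def)
    have "0 \<le> (\<integral>u. 1 / (s - u) \<partial>m)"
    proof (rule integral_nonneg_AE)
      show "AE u in m. 0 \<le> 1 / (s - u)" using AE_le_supS[OF m]
      proof eventually_elim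
        case (elim u)
        then have "ereal u < ereal s" using s(1) by (rule le_less_trans)
        then show ?case by simp
      qed
    qed
    then have "s * (q - (\<integral>u. 1 / (s - u) \<partial>m)) \<le> 0" using q0 sp by (simp add: mult_le_0_iff)
    then show False using s(2) r by simp
  qed
  show ?thesis unfolding s_plus_def e by (simp add: top_ereal_def)
qed

lemma intK:
  assumes S: "supS m = ereal S" and s: "S < s" shows "integrable m (\<lambda>u. 1/(s-u))"
proof (rule int_bound_AE[OF m, where C="(1+S)/(s-S)"])
  have AS: "AE u in m. u \<le> S" using AE_le_supS[OF m] S by simp
  show "AE u in m. \<bar>1/(s-u)\<bar> \<le> (1+S)/(s-S) * (1 / (1 + u))" using AS posm
  proof eventually_elim
    case (elim u)
    have "1/(s-u) \<le> 1/(s-S)" using elim s by (intro divide_left_mono) auto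
    also have "\<dots> \<le> (1+S)/(s-S) * (1 / (1 + u))"
    proof -
      have h: "1 \<le> (1+S)/(1+u)" using elim by simp
      have "1/(s-S) = 1/(s-S) * 1" by simp
      also have "\<dots> \<le> 1/(s-S) * ((1+S)/(1+u))" using h s by (intro mult_left_mono) auto
      also have "\<dots> = (1+S)/(s-S) * (1 / (1 + u))" by simp
      finally show ?thesis .
    qed
    finally show ?case using elim s by simp
  qed
qed measurable

lemma upperB: "supS M \<le> s_plus q r m"
proof (cases "s_plus q r m = \<infinity>")
  case True then show ?thesis by simp
next
  case False
  let ?A = "{s. supS m < ereal s \<and> s * (q - (\<integral>u. 1 / (s - u) \<partial>m)) > r}"
  have qp: "0 < q" using False splus_inf q by (cases "q = 0") auto
  have "?A \<noteq> {}"
  proof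
    assume e: "?A = {}"
    show False using False unfolding s_plus_def e by (simp add: top_ereal_def)
  qed
  then obtain s0 where s0: "supS m < ereal s0" by auto
  then have "supS m \<noteq> \<infinity>" by auto
  then obtain S where S: "supS m = ereal S" "0 < S" by (rule supS_fin)
  have AS: "AE u in m. u \<le> S" using AE_le_supS[OF m] S by simp
  have Tge: "ereal S \<le> s_plus q r m" unfolding s_plus_def
    by (rule Inf_greatest) (use S in auto)
  then obtain T where T: "s_plus q r m = ereal T" using False by (cases "s_plus q r m") auto
  have TS: "S \<le> T" using Tge T by simp
  define \<tau> where "\<tau> = 1/T"
  have \<tau>: "0 < \<tau>" "\<tau> \<le> 1/S" using TS S by (auto simp: \<tau>_def field_simps)
  obtain HL where HL: "HL holomorphic_on ball 1 (1 + 1/S)"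
    "\<And>x. -(1/S) < x \<Longrightarrow> x < 2 + 1/S \<Longrightarrow> integrable m (\<lambda>u. 1/(1+x*u)) \<and>
          HL (of_real x) = of_real (\<integral>u. 1/(1+x*u) \<partial>m) \<and> 0 < (\<integral>u. 1/(1+x*u) \<partial>m)"
    "\<And>z. z \<in> ball 1 (1 + 1/S) \<Longrightarrow> Im z \<noteq> 0 \<Longrightarrow> Im (HL z) * Im z < 0"
    using L_ext[OF m S m_nz] by blast
  have sub: "ball (1::complex) (1+\<tau>) \<subseteq> ball 1 (1 + 1/S)" using \<tau> by auto
  define kW where "kW z = of_real q + z * (of_real r + HL z)" for z
  have nz: "kW z \<noteq> 0" if z: "z \<in> ball 1 (1+\<tau>)" for z
  proof (cases "Im z = 0")
    case False
    then have z0: "z \<noteq> 0" by auto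
    define w where "w = of_real q / z + of_real r + HL z"
    have kw: "kW z = z * w" using z0 by (simp add: kW_def w_def field_simps)
    have "Im (of_real q / z) * Im z = - q * (Im z)^2 / ((Re z)^2 + (Im z)^2)"
      by (simp add: Im_divide power2_eq_square)
    moreover have "0 \<le> q * (Im z)^2 / ((Re z)^2 + (Im z)^2)" using q by simp
    ultimately have "Im (of_real q / z) * Im z \<le> 0" by simp
    moreover have "Im (HL z) * Im z < 0" using HL(3)[of z] z sub False by auto
    ultimately have "Im w * Im z < 0" by (simp add: w_def algebra_simps)
    then have "w \<noteq> 0" by auto
    then show ?thesis using kw z0 by simp
  next
    case True
    define x where "x = Re z"
    have zx: "z = of_real x" using real_of_Im0[OF True] by (simp add: x_def)
    have x: "-\<tau> < x" "x < 2 + \<tau>" using ball1_real[OF z True] by (auto simp: x_def)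
    have x': "-(1/S) < x" "x < 2 + 1/S" using x \<tau> by auto
    have I: "HL z = of_real (\<integral>u. 1/(1+x*u) \<partial>m)" "0 < (\<integral>u. 1/(1+x*u) \<partial>m)"
      "integrable m (\<lambda>u. 1/(1+x*u))" using HL(2)[OF x'] zx by auto
    have kx: "kW z = of_real (q + x * (r + (\<integral>u. 1/(1+x*u) \<partial>m)))" using I zx by (simp add: kW_def)
    have "0 < q + x * (r + (\<integral>u. 1/(1+x*u) \<partial>m))"
    proof (cases "0 \<le> x")
      case True then show ?thesis using qp I r by (simp add: add_pos_nonneg)
    next
      case False
      define s where "s = -1/x"
      have xs: "x = -1/s" using False by (simp add: s_def)
      have s: "T < s" using False x \<tau> TS S by (auto simp: s_def \<tau>_def field_simps)
      have sp: "0 < s" using s TS S by simp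
      have "Inf (ereal ` ?A) < ereal s" using T s by (simp add: s_plus_def[symmetric])
      then obtain s' where s': "supS m < ereal s'" "s' * (q - (\<integral>u. 1 / (s' - u) \<partial>m)) > r" "s' < s"
        by (auto simp: Inf_less_iff)
      have s'S: "S < s'" using s' S by simp
      have s'p: "0 < s'" using s'S S by simp
      have Kle: "(\<integral>u. 1/(s-u) \<partial>m) \<le> (\<integral>u. 1/(s'-u) \<partial>m)"
      proof (rule integral_mono_AE[OF intK[OF S(1)] intK[OF S(1)]])
        show "S < s" using s'S s' by simp
        show "S < s'" by (rule s'S)
        show "AE u in m. 1/(s-u) \<le> 1/(s'-u)" using AS
          by eventually_elim (use s'S s' in \<open>auto intro!: divide_left_mono\<close>)
      qed
      have xL: "x * (\<integral>u. 1/(1+x*u) \<partial>m) = - (\<integral>u. 1/(s-u) \<partial>m)"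
      proof -
        have "x * (\<integral>u. 1/(1+x*u) \<partial>m) = (\<integral>u. x * (1/(1+x*u)) \<partial>m)" by (rule integral_mult_right_zero[symmetric])
        also have "\<dots> = (\<integral>u. - (1/(s-u)) \<partial>m)"
        proof (rule integral_cong_AE)
          show "AE u in m. x * (1/(1+x*u)) = - (1/(s-u))" using AS
          proof eventually_elim
            case (elim u)
            have "u < s" using elim s'S s' by simp
            then show ?case using sp by (simp add: xs field_simps)
          qed
        qed measurable
        also have "\<dots> = - (\<integral>u. 1/(s-u) \<partial>m)" by simp
        finally show ?thesis .
      qed
      have "r / s \<le> r / s'" using r s'p s' by (intro divide_left_mono) auto
      also have "r / s' < q - (\<integral>u. 1 / (s' - u) \<partial>m)" using s'(2) s'p by (simp add: field_simps)
      also have "\<dots> \<le> q - (\<integral>u. 1/(s-u) \<partial>m)" using Kle by simp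
      finally have "r/s < q - (\<integral>u. 1/(s-u) \<partial>m)" .
      moreover have "q + x * (r + (\<integral>u. 1/(1+x*u) \<partial>m)) = q - r/s - (\<integral>u. 1/(s-u) \<partial>m)"
        using xL by (simp add: algebra_simps xs)
      ultimately show ?thesis by simp
    qed
    then show ?thesis using kx by (metis of_real_eq_0_iff order_less_irrefl)
  qed
  define \<Phi> where "\<Phi> z = z / kW z" for z
  have hol: "\<Phi> holomorphic_on ball 1 (1+\<tau>)"
    unfolding \<Phi>_def kW_def
    by (intro holomorphic_on_divide holomorphic_intros holomorphic_on_subset[OF HL(1) sub])
       (use nz in \<open>auto simp: kW_def\<close>)
  have eq: "\<Phi> (of_real w) = of_real (a + b*w + (\<integral>u. w/(1+w*u) \<partial>M))" if w: "0 < w" "w < 2" for w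
  proof -
    have Sp: "0 < 1/S" using S by simp
    have w'1: "-(1/S) < w" using w Sp by linarith
    have w'2: "w < 2 + 1/S" using w Sp by linarith
    note w' = w'1 w'2
    have "\<Phi> (of_real w) = of_real w / (of_real q + of_real w * (of_real r + of_real (\<integral>u. 1/(1+w*u) \<partial>m)))"
      using HL(2)[OF w'] by (simp add: \<Phi>_def kW_def)
    also have "\<dots> = of_real (w / (q + w * (r + (\<integral>u. 1/(1+w*u) \<partial>m))))" by simp
    also have "w / (q + w * (r + (\<integral>u. 1/(1+w*u) \<partial>m))) = w / (q + r*w + w * (\<integral>u. 1/(1+w*u) \<partial>m))"
      by (simp add: algebra_simps)
    also have "\<dots> = a + b*w + (\<integral>u. w/(1+w*u) \<partial>M)" using inv_rel[OF w(1)] by simp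
    finally show ?thesis .
  qed
  have "supS M \<le> ereal (1/\<tau>)" by (rule upperM[OF M \<tau>(1) hol eq])
  then show ?thesis using T TS S by (simp add: \<tau>_def)
qed

end


context setting begin

lemma mbar_fin:
  assumes "mbar0 m \<noteq> \<infinity>"
  obtains \<mu>0 where "mbar0 m = ereal \<mu>0" "0 < \<mu>0" "emeasure m (space m) = ennreal \<mu>0"
    "measure m (space m) = \<mu>0" "finite_measure m"
proof -
  have fin: "emeasure m (space m) \<noteq> \<infinity>" using assms by (auto simp: mbar0_def)
  then obtain \<mu>0 where e: "emeasure m (space m) = ennreal \<mu>0" "0 \<le> \<mu>0"
    by (cases "emeasure m (space m)") auto
  have "\<mu>0 \<noteq> 0" using e m_nz by auto
  then have p: "0 < \<mu>0" using e by simp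
  have "mbar0 m = ereal \<mu>0" using e by (simp add: mbar0_def)
  moreover have "measure m (space m) = \<mu>0" using e by (simp add: measure_def)
  moreover have "finite_measure m" using fin by (rule finite_measureI)
  ultimately show ?thesis using that e p by blast
qed

lemma sminus_lb: "ereal r / (ereal r + mbar0 m + ereal q * infS m) * infS m \<le> s_minus q r m"
proof -
  have sm0: "0 \<le> s_minus q r m" by (rule sminus_ge0)
  show ?thesis
  proof (cases "r = 0 \<or> mbar0 m = \<infinity>")
    case True
    then have "ereal r / (ereal r + mbar0 m + ereal q * infS m) = 0"
      using sig by (auto simp: divide_ereal_def)
    then show ?thesis using sm0 by simp
  next
    case False
    then have rp: "0 < r" using r by simp
    obtain \<mu>0 where mu: "mbar0 m = ereal \<mu>0" "0 < \<mu>0" "measure m (space m) = \<mu>0" "finite_measure m"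
      using mbar_fin False by metis
    define D where "D = r + \<mu>0 + q * sig"
    have Dp: "0 < D" using rp mu q sig by (simp add: D_def add_pos_nonneg)
    define t where "t = r / D * sig"
    have lhs: "ereal r / (ereal r + mbar0 m + ereal q * infS m) * infS m = ereal t"
      using Dp by (simp add: mu sig t_def D_def)
    show ?thesis
    proof (cases "t = 0")
      case True then show ?thesis using lhs sm0 by (simp add: zero_ereal_def)
    next
      case False
      have tp: "0 < t" using False rp Dp sig by (simp add: t_def)
      have "sig \<noteq> 0" using False by (auto simp: t_def)
      then have sigp: "0 < sig" using sig(2) by simp
      have tsig: "t < sig"
      proof -
        have qs: "0 \<le> q * sig" using q sig(2) by simp
        have "r < D" using mu(2) qs unfolding D_def by linarith
        then have "r / D < 1" using Dp by simp
        then show ?thesis using mult_strict_right_mono[OF \<open>r / D < 1\<close> sigp] by (simp add: t_def)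
      qed
      obtain HS where HS: "HS holomorphic_on ball 1 (1+sig)"
        "\<And>x. -sig < x \<Longrightarrow> x < 2 + sig \<Longrightarrow> integrable m (\<lambda>u. 1/(x+u)) \<and>
              HS (of_real x) = of_real (\<integral>u. 1/(x+u) \<partial>m) \<and> 0 < (\<integral>u. 1/(x+u) \<partial>m)"
        "\<And>z. z \<in> ball 1 (1+sig) \<Longrightarrow> Im z \<noteq> 0 \<Longrightarrow> Im (HS z) * Im z < 0"
        using S_ext[OF m sig m_nz] by blast
      have "ereal t \<le> s_minus q r m"
      proof (rule dense_le_bounded[of 0])
        show "0 < ereal t" using tp by simp
        fix w :: ereal assume w: "0 < w" "w < ereal t"
        then obtain s where ws: "w = ereal s" by (cases w) auto
        have s: "0 < s" "s < t" using w ws by auto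
        have ss: "s < sig" using s tsig by simp
        have I: "integrable m (\<lambda>u. 1/(-s+u))" using HS(2)[of "-s"] s ss by auto
        have J: "(\<integral>u. 1/(u-s) \<partial>m) \<le> \<mu>0 / (sig - s)"
        proof -
          have "(\<integral>u. 1/(u-s) \<partial>m) \<le> (\<integral>u. 1/(sig - s) \<partial>m)"
          proof (rule integral_mono_AE)
            show "integrable m (\<lambda>u. 1/(u-s))" using I by simp
            show "integrable m (\<lambda>u. 1/(sig - s))" using finite_measure.integrable_const[OF mu(4)] by blast
            show "AE u in m. 1/(u-s) \<le> 1/(sig - s)" using Asig
              by eventually_elim (use ss in \<open>auto intro!: divide_left_mono\<close>)
          qed
          also have "\<dots> = \<mu>0 / (sig - s)" using mu(3) by simp
          finally show ?thesis .
        qed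
        have "s * (q + (\<integral>u. 1/(u-s) \<partial>m)) \<le> s * (q + \<mu>0 / (sig - s))"
          using J s by (intro mult_left_mono) auto
        also have "\<dots> < r"
        proof -
          have "s * D < r * sig" using s Dp by (simp add: t_def field_simps)
          then have h: "s * r + s * \<mu>0 + s * q * sig < r * sig" by (simp add: D_def algebra_simps)
          have "s * q * (sig - s) \<le> s * q * sig" using s q by (simp add: algebra_simps)
          then have "s * q * (sig - s) + s * \<mu>0 < r * (sig - s)" using h by (simp add: algebra_simps)
          then have "(s * q * (sig - s) + s * \<mu>0) / (sig - s) < r" using ss by (simp add: field_simps)
          moreover have "s * (q + \<mu>0 / (sig - s)) = (s * q * (sig - s) + s * \<mu>0) / (sig - s)"
            using ss by (simp add: field_simps)
          ultimately show ?thesis by simp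
        qed
        finally have "s * (q + (\<integral>u. 1/(u-s) \<partial>m)) < r" .
        then have "s \<in> {s. ereal s < infS m \<and> s * (q + (\<integral>u. 1 / (u - s) \<partial>m)) < r}"
          using ss sig by auto
        then show "w \<le> s_minus q r m" unfolding s_minus_def ws by (auto intro: Sup_upper)
      qed
      then show ?thesis using lhs by simp
    qed
  qed
qed

lemma splus_ub:
  assumes qp: "0 < q"
  shows "s_plus q r m \<le> supS m + (ereal r + mbar0 m) / ereal q"
proof (cases "supS m = \<infinity> \<or> mbar0 m = \<infinity>")
  case True
  have nn: "0 \<le> (ereal r + mbar0 m) / ereal q" using r qp by (auto simp: mbar0_def intro!: divide_nonneg_nonneg)
  have e: "supS m + (ereal r + mbar0 m) / ereal q = \<infinity>"
  proof (cases "supS m = \<infinity>")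
    case True then show ?thesis using nn by simp
  next
    case False
    then have "mbar0 m = \<infinity>" using \<open>supS m = \<infinity> \<or> mbar0 m = \<infinity>\<close> by simp
    moreover have "supS m \<noteq> -\<infinity>" using supS_pos[OF suppm] by auto
    ultimately show ?thesis using qp False by (cases "supS m") auto
  qed
  show ?thesis unfolding e by simp
next
  case False
  obtain S where S: "supS m = ereal S" "0 < S" using False by (metis supS_fin)
  obtain \<mu>0 where mu: "mbar0 m = ereal \<mu>0" "0 < \<mu>0" "measure m (space m) = \<mu>0" "finite_measure m"
    using mbar_fin False by metis
  define B where "B = S + (r + \<mu>0)/q"
  have rhs: "supS m + (ereal r + mbar0 m) / ereal q = ereal B" using qp by (simp add: S mu B_def)
  have AS: "AE u in m. u \<le> S" using AE_le_supS[OF m] S by simp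
  have "s_plus q r m \<le> ereal B"
  proof (rule dense_ge_bounded[of "ereal B" "ereal (B + 1)"])
    show "ereal B < ereal (B + 1)" by simp
    fix w :: ereal assume w: "ereal B < w" "w < ereal (B + 1)"
    then obtain s where ws: "w = ereal s" by (cases w) auto
    have sB: "B < s" using w ws by simp
    define D where "D = s - S"
    have qD: "r + \<mu>0 < q * D" using sB qp by (simp add: B_def D_def field_simps)
    have "0 < q * D" using qD r mu(2) by linarith
    then have Dp: "0 < D" using qp by (simp add: zero_less_mult_iff)
    have sD: "D \<le> s" using S by (simp add: D_def)
    have sS: "S < s" using Dp by (simp add: D_def)
    have K: "(\<integral>u. 1/(s-u) \<partial>m) \<le> \<mu>0 / D"
    proof -
      have "(\<integral>u. 1/(s-u) \<partial>m) \<le> (\<integral>u. 1/D \<partial>m)"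
      proof (rule integral_mono_AE)
        show "integrable m (\<lambda>u. 1/(s-u))" by (rule intK[OF S(1) sS])
        show "integrable m (\<lambda>u. 1/D)" using finite_measure.integrable_const[OF mu(4)] by blast
        show "AE u in m. 1/(s-u) \<le> 1/D" using AS
          by eventually_elim (use sS in \<open>auto simp: D_def intro!: divide_left_mono\<close>)
      qed
      also have "\<dots> = \<mu>0 / D" using mu(3) by simp
      finally show ?thesis .
    qed
    have "r < s * (q - \<mu>0 / D)"
    proof -
      have h1: "r * D < (q * D - \<mu>0) * D" using qD Dp by (intro mult_strict_right_mono) auto
      have h2: "(q * D - \<mu>0) * D \<le> (q * D - \<mu>0) * s" using qD r sD by (intro mult_left_mono) auto
      have "r * D < s * (q * D - \<mu>0)" using h1 h2 by (simp add: algebra_simps)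
      then have "r < s * (q * D - \<mu>0) / D" using Dp by (simp add: field_simps)
      moreover have "s * (q * D - \<mu>0) / D = s * (q - \<mu>0 / D)" using Dp by (simp add: field_simps)
      ultimately show ?thesis by simp
    qed
    also have "\<dots> \<le> s * (q - (\<integral>u. 1/(s-u) \<partial>m))"
      using K sS S by (intro mult_left_mono) auto
    finally have "s \<in> {s. supS m < ereal s \<and> s * (q - (\<integral>u. 1 / (s - u) \<partial>m)) > r}"
      using sS S by auto
    then show "s_plus q r m \<le> w" unfolding s_plus_def ws by (auto intro: Inf_lower)
  qed
  then show ?thesis using rhs by simp
qed

lemma M_nz:
  assumes "(0 < a \<and> b = 0) \<or> (a = 0 \<and> 0 < b)"
  shows "emeasure M (space M) \<noteq> 0"
proof
  assume M0: "emeasure M (space M) = 0"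
  have Mint: "(\<integral>u. x/(x+u) \<partial>M) = 0" for x
  proof -
    have "AE u in M. False" using M0 AE_False_iff by blast
    then have "AE u in M. x/(x+u) = 0" by (rule eventually_mono) simp
    then show ?thesis by (simp add: integral_eq_zero_AE)
  qed
  have g: "a*x + b = 1 / (q + r/x + (\<integral>u. 1/(x+u) \<partial>m))" if "0 < x" for x
    using grep[OF that] Mint by simp
  have gi: "q + r/x + (\<integral>u. 1/(x+u) \<partial>m) = 1/(a*x + b)" if "0 < x" for x
    using g[OF that] by simp
  have i1: "integrable m (\<lambda>u. 1/(1+u))" and i2: "integrable m (\<lambda>u. 1/(2+u))" using intI by auto
  show False using assms
  proof
    assume ab: "0 < a \<and> b = 0"
    then have q0: "q = 0" using q0 by simp
    have f1: "r + (\<integral>u. 1/(1+u) \<partial>m) = 1/a" using gi[of 1] ab q0 by simp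
    have f2: "r/2 + (\<integral>u. 1/(2+u) \<partial>m) = 1/(2*a)" using gi[of 2] ab q0 by simp
    have "0 < (\<integral>u. 2/(2+u) - 1/(1+u) \<partial>m)"
    proof (rule int_pos[OF _ _ m_nz])
      have "integrable m (\<lambda>u. 2 * (1/(2+u)) - 1/(1+u))"
        by (intro Bochner_Integration.integrable_diff integrable_mult_right i1 i2)
      then show "integrable m (\<lambda>u. 2/(2+u) - 1/(1+u))" by simp
      show "AE u in m. 0 < 2/(2+u) - 1/(1+u)" using posm
      proof eventually_elim
        case (elim u)
        have e: "2/(2+u) - 1/(1+u) = u/((2+u)*(1+u))" using elim by (simp add: field_simps)
        have "0 < u/((2+u)*(1+u))" using elim by (intro divide_pos_pos mult_pos_pos) auto
        then show ?case by (simp only: e)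
      qed
    qed
    also have "(\<integral>u. 2/(2+u) - 1/(1+u) \<partial>m) = (\<integral>u. 2 * (1/(2+u)) - 1/(1+u) \<partial>m)" by simp
    also have "\<dots> = (\<integral>u. 2 * (1/(2+u)) \<partial>m) - (\<integral>u. 1/(1+u) \<partial>m)"
      by (intro Bochner_Integration.integral_diff integrable_mult_right i1 i2)
    also have "\<dots> = 2 * (\<integral>u. 1/(2+u) \<partial>m) - (\<integral>u. 1/(1+u) \<partial>m)"
      by (simp only: integral_mult_right_zero)
    finally have lt: "0 < 2 * (\<integral>u. 1/(2+u) \<partial>m) - (\<integral>u. 1/(1+u) \<partial>m)" .
    have h1: "(\<integral>u. 1/(1+u) \<partial>m) = 1/a - r" using f1 by linarith
    have h2: "(\<integral>u. 1/(2+u) \<partial>m) = 1/(2*a) - r/2" using f2 by linarith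
    have "2 * (1/(2*a)) = 1/a" using ab by simp
    then show False using lt h1 h2 by (simp add: algebra_simps)
  next
    assume ab: "a = 0 \<and> 0 < b"
    then have r0: "r = 0" using r0 by simp
    have f1: "q + (\<integral>u. 1/(1+u) \<partial>m) = 1/b" using gi[of 1] ab r0 by simp
    have f2: "q + (\<integral>u. 1/(2+u) \<partial>m) = 1/b" using gi[of 2] ab r0 by simp
    have "0 < (\<integral>u. 1/(1+u) - 1/(2+u) \<partial>m)"
    proof (rule int_pos[OF _ _ m_nz])
      show "integrable m (\<lambda>u. 1/(1+u) - 1/(2+u))"
        by (intro Bochner_Integration.integrable_diff i1 i2)
      show "AE u in m. 0 < 1/(1+u) - 1/(2+u)" using posm
      proof eventually_elim
        case (elim u)
        have "1/(2+u) < 1/(1+u)" using elim by (intro divide_strict_left_mono) auto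
        then show ?case by simp
      qed
    qed
    also have "(\<integral>u. 1/(1+u) - 1/(2+u) \<partial>m) = (\<integral>u. 1/(1+u) \<partial>m) - (\<integral>u. 1/(2+u) \<partial>m)"
      by (intro Bochner_Integration.integral_diff i1 i2)
    finally show False using f1 f2 by simp
  qed
qed

lemma inf_le_sup_M:
  assumes "(0 < a \<and> b = 0) \<or> (a = 0 \<and> 0 < b)"
  shows "infS M \<le> supS M"
proof -
  have "supp M \<noteq> {}" by (rule supp_nonempty[OF M M_nz[OF assms]])
  then show ?thesis unfolding infS_def supS_def by (intro Inf_le_Sup) auto
qed

end


theorem lemma4p2:
  fixes q r a b :: real and m M :: "real measure"
  assumes q: "q \<ge> 0" and r: "r \<ge> 0"
    and m: "m \<in> Mclass" and m_nz: "emeasure m (space m) \<noteq> 0"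
    and a: "a \<ge> 0" and b: "b \<ge> 0" and M: "M \<in> Mclass"
    and rep: "\<And>l::real. l > 0 \<Longrightarrow>
       q + r / l + (\<integral>u. 1 / (l + u) \<partial>m)
         = 1 / (a * l + b + (\<integral>u. l / (l + u) \<partial>M))"
  shows
   "(a = 0 \<and> b = 0 \<longrightarrow>
       ereal r / (ereal r + mbar0 m + ereal q * infS m) * infS m \<le> s_minus q r m
     \<and> s_minus q r m \<le> infS M
     \<and> supS M \<le> s_plus q r m
     \<and> (q > 0 \<longrightarrow> s_plus q r m \<le> supS m + (ereal r + mbar0 m) / ereal q)
     \<and> (q = 0 \<longrightarrow> s_plus q r m = \<infinity>))
  \<and> (a > 0 \<and> b = 0 \<longrightarrow>
       ereal r / (ereal r + mbar0 m) * infS m \<le> s_minus q r m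
     \<and> s_minus q r m \<le> infS M \<and> infS M \<le> supS M \<and> supS M \<le> supS m)
  \<and> (a = 0 \<and> b > 0 \<longrightarrow>
       infS m \<le> infS M \<and> infS M \<le> supS M \<and> supS M \<le> s_plus q r m
     \<and> (q > 0 \<longrightarrow> s_plus q r m \<le> supS m + mbar0 m / ereal q)
     \<and> (q = 0 \<longrightarrow> s_plus q r m = \<infinity>))
  \<and> (a > 0 \<and> b > 0 \<longrightarrow>
       (\<forall>x\<in>supp M. infS m \<le> ereal x \<and> ereal x \<le> supS m))"
proof -
  interpret S: setting q r a b m M
    using q r m m_nz a b M rep by (simp add: setting_def)
  have I: "a = 0 \<and> b = 0 \<longrightarrow>
       ereal r / (ereal r + mbar0 m + ereal q * infS m) * infS m \<le> s_minus q r m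
     \<and> s_minus q r m \<le> infS M
     \<and> supS M \<le> s_plus q r m
     \<and> (q > 0 \<longrightarrow> s_plus q r m \<le> supS m + (ereal r + mbar0 m) / ereal q)
     \<and> (q = 0 \<longrightarrow> s_plus q r m = \<infinity>)"
    using S.sminus_lb S.lowerB S.upperB S.splus_ub S.splus_inf by blast
  have II: "a > 0 \<and> b = 0 \<longrightarrow>
       ereal r / (ereal r + mbar0 m) * infS m \<le> s_minus q r m
     \<and> s_minus q r m \<le> infS M \<and> infS M \<le> supS M \<and> supS M \<le> supS m"
  proof
    assume ab: "a > 0 \<and> b = 0"
    then have q0: "q = 0" using S.q0 by simp
    have z: "ereal q * infS m = 0" using q0 S.sig by (simp add: zero_ereal_def)
    have e: "ereal r + mbar0 m + ereal q * infS m = ereal r + mbar0 m" unfolding z by (rule add_0_right)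
    have "ereal r / (ereal r + mbar0 m) * infS m \<le> s_minus q r m"
      using S.sminus_lb unfolding e .
    then show "ereal r / (ereal r + mbar0 m) * infS m \<le> s_minus q r m
     \<and> s_minus q r m \<le> infS M \<and> infS M \<le> supS M \<and> supS M \<le> supS m"
      using S.lowerB S.inf_le_sup_M ab S.upperA[OF q0] by simp
  qed
  have III: "a = 0 \<and> b > 0 \<longrightarrow>
       infS m \<le> infS M \<and> infS M \<le> supS M \<and> supS M \<le> s_plus q r m
     \<and> (q > 0 \<longrightarrow> s_plus q r m \<le> supS m + mbar0 m / ereal q)
     \<and> (q = 0 \<longrightarrow> s_plus q r m = \<infinity>)"
  proof
    assume ab: "a = 0 \<and> b > 0"
    then have r0: "r = 0" using S.r0 by simp
    have "q > 0 \<longrightarrow> s_plus q r m \<le> supS m + mbar0 m / ereal q"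
      using S.splus_ub r0 by (simp add: zero_ereal_def[symmetric])
    then show "infS m \<le> infS M \<and> infS M \<le> supS M \<and> supS M \<le> s_plus q r m
     \<and> (q > 0 \<longrightarrow> s_plus q r m \<le> supS m + mbar0 m / ereal q)
     \<and> (q = 0 \<longrightarrow> s_plus q r m = \<infinity>)"
      using S.lowerA[OF r0] S.inf_le_sup_M ab S.upperB S.splus_inf by simp
  qed
  have IV: "a > 0 \<and> b > 0 \<longrightarrow> (\<forall>x\<in>supp M. infS m \<le> ereal x \<and> ereal x \<le> supS m)"
  proof (intro impI ballI)
    fix x assume ab: "a > 0 \<and> b > 0" and x: "x \<in> supp M"
    then have q0: "q = 0" and r0: "r = 0" using S.q0 S.r0 by auto
    have "infS M \<le> ereal x" unfolding infS_def using x by (auto intro: Inf_lower)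
    moreover have "ereal x \<le> supS M" unfolding supS_def using x by (auto intro: Sup_upper)
    ultimately show "infS m \<le> ereal x \<and> ereal x \<le> supS m"
      using S.lowerA[OF r0] S.upperA[OF q0] by (meson order_trans)
  qed
  show ?thesis using I II III IV by blast
qed

end
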